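(* Let $K=P(n_1,\dots,n_k)$ be a pretzel knot with its standard diagram, $n=|n_1|+\dots+|n_k|$ crossings ordered $1,\dots,n$ as described in the context, signed Tait graph $G$ (edges $e_1,\dots,e_n$ ordered by crossing number) and balanced overlaid Tait graph $\Gamma$ obtained by omitting the unbounded region $U$ and the upper deck $R_{\mathrm{top}}$. For a perfect matching $\mu$ of $\Gamma$ let $\alpha(\mu)$ be the word of length $n$ whose $j$-th letter is $\alpha(\varepsilon_j)$, where $\varepsilon_j$ is the edge of $\mu$ incident with crossing $j$. Then, as formal sums of words, $$\sum_{\mu}\alpha(\mu)=\sum_{S} a(S),$$ where $\mu$ ranges over all perfect matchings of $\Gamma$ and $S$ over all spanning trees of $G$; that is, the words $\alpha(\mu)$ give exactly the complete list (with multiplicity) of activity words of spanning trees of $G$.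
   Context: Pretzel diagram: for nonzero integers $n_1,\dots,n_k$, the diagram of $P(n_1,\dots,n_k)$ consists of $k$ vertical twist columns placed left to right, column $i$ being $|n_i|$ crossings between two strands stacked vertically; for $1\le i<k$ the top-right endpoint of column $i$ is joined to the top-left endpoint of column $i+1$ by a short arc, and likewise at the bottom; the top-left endpoint of column $1$ is joined to the top-right endpoint of column $k$ by an arc passing above everything, and likewise at the bottom by an arc passing below. Assume the diagram has one component. Its regions are: the unbounded region $U$; the upper deck $R_{\mathrm{top}}$ (bounded by the upper outer arc and the tops of the columns and top short arcs); the lower deck $R_{\mathrm{bot}}$; the $|n_i|-1$ regions inside column $i$ between consecutive crossings; and for $1\le i<k$ the region $W_i$ between columns $i$ and $i+1$. The black regions are $R_{\mathrm{top}}$, $R_{\mathrm{bot}}$ and the regions inside columns; the white regions are $U,W_1,\dots,W_{k-1}$. Crossings are numbered $1,\dots,n$: column 1 from top to bottom, then column 2 from bottom to top, then column 3 from bottom to top, and so on up to column $k$. Signed Tait graph $G$: vertices are the black regions, and each crossing gives an edge joining the two black regions at it; the edge is positive if, viewing the crossing with the two black regions above and below it, the overstrand runs from lower left to upper right, and negative otherwise. The sign of $n_i$ is, by convention, the sign of the Tait edges of the crossings in column $i$. Edge $e_j$ is the edge of crossing $j$. Tutte activity: for a spanning tree $S$ and an edge $e$ (with edges ordered $e_1<\dots<e_n$): if $e\in S$, it is $L$ (live) if $e$ is the lowest edge reconnecting $S-\{e\}$, else $D$; if $e\notin S$, it is $\ell$ if $e$ is the lowest edge in the unique cycle of $S\cup\{e\}$,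 else $d$; for negative edges use the barred letters $\overline{L},\overline{D},\overline{\ell},\overline{d}$. The activity word $a(S)$ has $j$-th letter the letter of $e_j$. Overlaid Tait graph $\widehat\Gamma$: bipartite plane graph with a vertex per crossing and a vertex per region, and for each crossing $c$ and each of its four corners an edge from $c$ to the region at that corner. $\Gamma$ is $\widehat\Gamma$ with the vertices $U$ and $R_{\mathrm{top}}$ deleted. Activity weighting: the edge $\varepsilon$ of $\Gamma$ joining crossing $c$ to region $R$ gets the letter $\alpha(\varepsilon)$ determined by: internal ($L$/$D$) if $R$ is black, external ($\ell$/$d$) if $R$ is white; live ($L$ or $\ell$) if $c$ is the lowest-numbered crossing incident with $R$, dead ($D$ or $d$) otherwise; barred if the Tait edge of $c$ is negative, unbarred if positive. *)

theory Defs
  imports Main "HOL-Library.Multiset"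
begin

text \<open>A multigraph is given by a vertex set V and an endpoint map ends; an edge f joins
  fst (ends f) and snd (ends f).  Parallel edges are allowed.\<close>

definition mg_adj :: "(nat \<Rightarrow> 'v \<times> 'v) \<Rightarrow> nat set \<Rightarrow> ('v \<times> 'v) set" where
  "mg_adj ends F = {(fst (ends f), snd (ends f)) | f. f \<in> F} \<union> {(snd (ends f), fst (ends f)) | f. f \<in> F}"

definition mg_connected :: "'v set \<Rightarrow> (nat \<Rightarrow> 'v \<times> 'v) \<Rightarrow> nat set \<Rightarrow> bool" where
  "mg_connected V ends F \<longleftrightarrow> (\<forall>u\<in>V. \<forall>v\<in>V. (u, v) \<in> (mg_adj ends F)\<^sup>*)"

definition mg_cycle :: "(nat \<Rightarrow> 'v \<times> 'v) \<Rightarrow> nat set \<Rightarrow> bool" where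
  "mg_cycle ends C \<longleftrightarrow> (\<exists>es vs. es \<noteq> [] \<and> distinct es \<and> set es = C \<and> length vs = length es \<and> distinct vs \<and>
     (\<forall>i<length es. ends (es ! i) = (vs ! i, vs ! ((i + 1) mod length es))
                   \<or> ends (es ! i) = (vs ! ((i + 1) mod length es), vs ! i)))"

definition mg_spanning_tree :: "'v set \<Rightarrow> nat set \<Rightarrow> (nat \<Rightarrow> 'v \<times> 'v) \<Rightarrow> nat set \<Rightarrow> bool" where
  "mg_spanning_tree V E ends S \<longleftrightarrow> S \<subseteq> E \<and> mg_connected V ends S \<and> \<not> (\<exists>C\<subseteq>S. mg_cycle ends C)"

text \<open>A letter is determined by: internal (L/D) vs external (l/d); live (L/l) vs dead (D/d);
  barred (negative) vs unbarred.  So L = Letter True True False, \<open>D\<close> = Letter True False False,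
  l = Letter False True False, d = Letter False False False, barred versions with last field True.\<close>
datatype letter = Letter (internal: bool) (live: bool) (barred: bool)

text \<open>Tutte activity letter of edge e w.r.t. spanning tree S (edges ordered by \<le> on nat);
  neg e says whether e is a negative edge.\<close>
definition tutte_letter :: "'v set \<Rightarrow> nat set \<Rightarrow> (nat \<Rightarrow> 'v \<times> 'v) \<Rightarrow> (nat \<Rightarrow> bool) \<Rightarrow> nat set \<Rightarrow> nat \<Rightarrow> letter" where
  "tutte_letter V E ends neg S e =
     (if e \<in> S
      then Letter True (e = Min {f \<in> E. mg_connected V ends (insert f (S - {e}))}) (neg e)
      else Letter False (e = Min (THE C. C \<subseteq> insert e S \<and> mg_cycle ends C)) (neg e))"

text \<open>Columns are indexed 0..k-1 (column i here is column i+1 of the paper); crossings within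
  a column are indexed by position p = 0..|n_i|-1 counted from the top.\<close>

definition pcols :: "int list \<Rightarrow> nat" where "pcols ns = length ns"

definition csize :: "int list \<Rightarrow> nat \<Rightarrow> nat" where "csize ns i = nat \<bar>ns ! i\<bar>"

definition ncross :: "int list \<Rightarrow> nat" where "ncross ns = (\<Sum>i<length ns. csize ns i)"

definition coffset :: "int list \<Rightarrow> nat \<Rightarrow> nat" where "coffset ns i = (\<Sum>j<i. csize ns j)"

text \<open>Crossing number of crossing at position p of column i: the first column is numbered
  top to bottom, every later column bottom to top, consecutively.\<close>
definition cnum :: "int list \<Rightarrow> nat \<Rightarrow> nat \<Rightarrow> nat" where
  "cnum ns i p = (if i = 0 then p + 1 else coffset ns i + (csize ns i - p))"

definition cloc :: "int list \<Rightarrow> nat \<Rightarrow> nat \<times> nat" where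
  "cloc ns j = (THE (i, p). i < pcols ns \<and> p < csize ns i \<and> cnum ns i p = j)"

datatype region = U | Rtop | Rbot | Inside nat nat | W nat
  \<comment> \<open>Inside i p: region inside column i between positions p and p+1;
      W i: white region between columns i and i+1.\<close>

definition black_regions :: "int list \<Rightarrow> region set" where
  "black_regions ns = {Rtop, Rbot} \<union> {Inside i p | i p. i < pcols ns \<and> p + 1 < csize ns i}"

definition white_regions :: "int list \<Rightarrow> region set" where
  "white_regions ns = {U} \<union> {W i | i. i + 1 < pcols ns}"

definition regions :: "int list \<Rightarrow> region set" where
  "regions ns = black_regions ns \<union> white_regions ns"

datatype corner = Above | Below | Left | Right

definition corner_reg :: "int list \<Rightarrow> nat \<Rightarrow> nat \<Rightarrow> corner \<Rightarrow> region" where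
  "corner_reg ns i p c = (case c of
      Above \<Rightarrow> (if p = 0 then Rtop else Inside i (p - 1))
    | Below \<Rightarrow> (if p + 1 = csize ns i then Rbot else Inside i p)
    | Left \<Rightarrow> (if i = 0 then U else W (i - 1))
    | Right \<Rightarrow> (if i + 1 = pcols ns then U else W i))"

definition creg :: "int list \<Rightarrow> nat \<Rightarrow> corner \<Rightarrow> region" where
  "creg ns j c = (case cloc ns j of (i, p) \<Rightarrow> corner_reg ns i p c)"

definition neg_cross :: "int list \<Rightarrow> nat \<Rightarrow> bool" where
  "neg_cross ns j = (ns ! fst (cloc ns j) < 0)"

datatype endpt = TL | TR | BL | BR

definition col_ends :: "int list \<Rightarrow> (nat \<times> endpt) set" where
  "col_ends ns = {(i, x) | i x. i < pcols ns}"

text \<open>Arcs of the diagram joining column endpoints: strands through a twist column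
  (with an odd number of crossings TL-BR and TR-BL, else TL-BL and TR-BR), the short arcs
  between neighbouring columns, and the two outer arcs.\<close>
definition strand_links :: "int list \<Rightarrow> ((nat \<times> endpt) \<times> (nat \<times> endpt)) set" where
  "strand_links ns =
     {((i, TL), (i, if odd (csize ns i) then BR else BL)) | i. i < pcols ns}
   \<union> {((i, TR), (i, if odd (csize ns i) then BL else BR)) | i. i < pcols ns}
   \<union> {((i, TR), (i + 1, TL)) | i. i + 1 < pcols ns}
   \<union> {((i, BR), (i + 1, BL)) | i. i + 1 < pcols ns}
   \<union> {((0, TL), (pcols ns - 1, TR)), ((0, BL), (pcols ns - 1, BR))}"

definition one_component :: "int list \<Rightarrow> bool" where
  "one_component ns \<longleftrightarrow>
     (\<forall>a\<in>col_ends ns. \<forall>b\<in>col_ends ns. (a, b) \<in> (strand_links ns \<union> (strand_links ns)\<inverse>)\<^sup>*)"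

definition tait_ends :: "int list \<Rightarrow> nat \<Rightarrow> region \<times> region" where
  "tait_ends ns j = (creg ns j Above, creg ns j Below)"

definition tait_spanning_trees :: "int list \<Rightarrow> nat set set" where
  "tait_spanning_trees ns =
     {S. mg_spanning_tree (black_regions ns) {1..ncross ns} (tait_ends ns) S}"

definition activity_word :: "int list \<Rightarrow> nat set \<Rightarrow> letter list" where
  "activity_word ns S =
     map (tutte_letter (black_regions ns) {1..ncross ns} (tait_ends ns) (neg_cross ns) S) [1..<ncross ns + 1]"

text \<open>Edges of Gamma-hat are pairs (crossing j, corner c); Gamma deletes U and Rtop.\<close>
definition gamma_edges :: "int list \<Rightarrow> (nat \<times> corner) set" where
  "gamma_edges ns = {(j, c) | j c. j \<in> {1..ncross ns} \<and> creg ns j c \<notin> {U, Rtop}}"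

definition gamma_region_vertices :: "int list \<Rightarrow> region set" where
  "gamma_region_vertices ns = regions ns - {U, Rtop}"

definition perfect_matchings :: "int list \<Rightarrow> (nat \<times> corner) set set" where
  "perfect_matchings ns =
     {M. M \<subseteq> gamma_edges ns
       \<and> (\<forall>j\<in>{1..ncross ns}. \<exists>!c. (j, c) \<in> M)
       \<and> (\<forall>R\<in>gamma_region_vertices ns. \<exists>!e. e \<in> M \<and> creg ns (fst e) (snd e) = R)}"

definition alpha_edge :: "int list \<Rightarrow> nat \<times> corner \<Rightarrow> letter" where
  "alpha_edge ns e = (case e of (j, c) \<Rightarrow>
      (let R = creg ns j c in
       Letter (R \<in> black_regions ns)
              (j = Min {j' \<in> {1..ncross ns}. \<exists>c'. creg ns j' c' = R})
              (neg_cross ns j)))"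

definition alpha_word :: "int list \<Rightarrow> (nat \<times> corner) set \<Rightarrow> letter list" where
  "alpha_word ns M = map (\<lambda>j. alpha_edge ns (j, THE c. (j, c) \<in> M)) [1..<ncross ns + 1]"

end

theory Submission
  imports Defs "HOL-Library.Multiset"
begin


definition vtx :: "int list \<Rightarrow> nat \<Rightarrow> nat \<Rightarrow> region" where
  "vtx ns i t = (if t = 0 then Rtop else if t = csize ns i then Rbot else Inside i (t - 1))"

context
  fixes ns :: "int list"
  assumes nz: "\<forall>x\<in>set ns. x \<noteq> 0"
begin

lemma csize_pos: "i < length ns \<Longrightarrow> 0 < csize ns i"
  using nz unfolding csize_def by (auto simp: nth_mem)

lemma coffset_Suc: "coffset ns (Suc i) = coffset ns i + csize ns i"
  by (simp add: coffset_def)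

lemma coffset_0[simp]: "coffset ns 0 = 0"
  by (simp add: coffset_def)

lemma coffset_mono: "i < i' \<Longrightarrow> coffset ns i + csize ns i \<le> coffset ns i'"
proof (induction i' )
  case 0 then show ?case by simp
next
  case (Suc i')
  then show ?case by (cases "i = i'") (auto simp: coffset_Suc)
qed

lemma ncross_coffset: "ncross ns = coffset ns (length ns)"
  by (simp add: ncross_def coffset_def)

lemma cnum_bounds:
  assumes "p < csize ns i"
  shows "coffset ns i < cnum ns i p \<and> cnum ns i p \<le> coffset ns i + csize ns i"
  using assms by (auto simp: cnum_def)

lemma cnum_lt_col:
  assumes "i < i'" "p < csize ns i" "p' < csize ns i'"
  shows "cnum ns i p < cnum ns i' p'"
  using cnum_bounds[OF assms(2)] cnum_bounds[OF assms(3)] coffset_mono[OF assms(1)] by linarith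

lemma cnum_same_col:
  assumes "p < csize ns i" "p' < csize ns i"
  shows "cnum ns i p < cnum ns i p' \<longleftrightarrow> (if i = 0 then p < p' else p' < p)"
  using assms by (auto simp: cnum_def)

lemma cnum_inj:
  assumes "p < csize ns i" "p' < csize ns i'" "cnum ns i p = cnum ns i' p'"
  shows "i = i' \<and> p = p'"
proof -
  have "i = i'"
    using cnum_lt_col[of i i' p p'] cnum_lt_col[of i' i p' p] assms
    by (metis less_irrefl nat_neq_iff)
  then show ?thesis using assms by (auto simp: cnum_def split: if_splits)
qed

lemma cnum_surj_aux:
  "i \<le> length ns \<Longrightarrow> 1 \<le> j \<Longrightarrow> j \<le> coffset ns i \<Longrightarrow> \<exists>i'<i. \<exists>p<csize ns i'. cnum ns i' p = j"
proof (induction i)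
  case 0 then show ?case by simp
next
  case (Suc i)
  show ?case
  proof (cases "j \<le> coffset ns i")
    case True then show ?thesis using Suc by (meson Suc_leD less_SucI)
  next
    case False
    then have j: "coffset ns i < j" "j \<le> coffset ns i + csize ns i" using Suc by (auto simp: coffset_Suc)
    show ?thesis
    proof (cases "i = 0")
      case True
      then show ?thesis using j Suc.prems by (intro exI[of _ 0]) (auto simp: cnum_def intro!: exI[of _ "j - 1"])
    next
      case False
      then show ?thesis using j
        by (intro exI[of _ i]) (auto simp: cnum_def intro!: exI[of _ "coffset ns i + csize ns i - j"])
    qed
  qed
qed

lemma cnum_surj:
  "j \<in> {1..ncross ns} \<Longrightarrow> \<exists>i<length ns. \<exists>p<csize ns i. cnum ns i p = j"
  using cnum_surj_aux[of "length ns" j] by (auto simp: ncross_coffset)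

lemma cnum_range:
  assumes "i < length ns" "p < csize ns i"
  shows "cnum ns i p \<in> {1..ncross ns}"
proof -
  have "coffset ns i + csize ns i \<le> ncross ns"
  proof (cases "Suc i = length ns")
    case True then show ?thesis by (simp add: ncross_coffset coffset_Suc[symmetric])
  next
    case False then show ?thesis using coffset_mono[of i "length ns"] assms by (simp add: ncross_coffset)
  qed
  then show ?thesis using cnum_bounds[OF assms(2)] by auto
qed

lemma E_eq: "{1..ncross ns} = {cnum ns i p | i p. i < length ns \<and> p < csize ns i}"
  using cnum_surj cnum_range by blast

lemma cloc_cnum:
  assumes "i < length ns" "p < csize ns i"
  shows "cloc ns (cnum ns i p) = (i, p)"
  unfolding cloc_def pcols_def
proof (rule the_equality)
  show "case (i, p) of (i', p') \<Rightarrow> i' < length ns \<and> p' < csize ns i' \<and> cnum ns i' p' = cnum ns i p"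
    using assms by simp
next
  fix x assume "case x of (i', p') \<Rightarrow> i' < length ns \<and> p' < csize ns i' \<and> cnum ns i' p' = cnum ns i p"
  then show "x = (i, p)" using cnum_inj[OF assms(2)] by (cases x) force
qed

lemma creg_cnum: "i < length ns \<Longrightarrow> p < csize ns i \<Longrightarrow> creg ns (cnum ns i p) x = corner_reg ns i p x"
  by (simp add: creg_def cloc_cnum)

lemma neg_cnum: "i < length ns \<Longrightarrow> p < csize ns i \<Longrightarrow> neg_cross ns (cnum ns i p) = (ns ! i < 0)"
  by (simp add: neg_cross_def cloc_cnum)


lemma tait_cnum: "i < length ns \<Longrightarrow> p < csize ns i \<Longrightarrow> tait_ends ns (cnum ns i p) = (vtx ns i p, vtx ns i (Suc p))"
  by (simp add: tait_ends_def creg_cnum corner_reg_def vtx_def)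

end


lemma adj_edge: "f \<in> F \<Longrightarrow> (fst (ends f), snd (ends f)) \<in> mg_adj ends F \<and> (snd (ends f), fst (ends f)) \<in> mg_adj ends F"
  unfolding mg_adj_def by blast

lemma adj_mono: "F \<subseteq> G \<Longrightarrow> (a, b) \<in> (mg_adj ends F)\<^sup>* \<Longrightarrow> (a, b) \<in> (mg_adj ends G)\<^sup>*"
proof -
  assume "F \<subseteq> G" "(a, b) \<in> (mg_adj ends F)\<^sup>*"
  moreover have "mg_adj ends F \<subseteq> mg_adj ends G" using \<open>F \<subseteq> G\<close> unfolding mg_adj_def by blast
  ultimately show ?thesis using rtrancl_mono by blast
qed

lemma adj_sym: "(a, b) \<in> (mg_adj ends F)\<^sup>* \<Longrightarrow> (b, a) \<in> (mg_adj ends F)\<^sup>*"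
proof -
  have "sym (mg_adj ends F)" unfolding mg_adj_def sym_def by blast
  then have "sym ((mg_adj ends F)\<^sup>*)" by (rule sym_rtrancl)
  then show "(a, b) \<in> (mg_adj ends F)\<^sup>* \<Longrightarrow> (b, a) \<in> (mg_adj ends F)\<^sup>*" unfolding sym_def by blast
qed

lemma adj_closed:
  assumes cl: "\<forall>f\<in>F. (fst (ends f) \<in> X \<longleftrightarrow> snd (ends f) \<in> X)"
    and "(a, b) \<in> (mg_adj ends F)\<^sup>*" "a \<in> X"
  shows "b \<in> X"
  using assms(2,3)
proof (induction rule: rtrancl_induct)
  case base then show ?case .
next
  case (step y z)
  from step.hyps(2) obtain f where f: "f \<in> F" "(y,z) = (fst (ends f), snd (ends f)) \<or> (y,z) = (snd (ends f), fst (ends f))"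
    unfolding mg_adj_def by auto
  have "fst (ends f) \<in> X \<longleftrightarrow> snd (ends f) \<in> X" using cl f(1) by blast
  then show ?case using f(2) step.IH step.prems by (auto simp: prod_eq_iff)
qed

lemma cycle_nonbridge:
  assumes "mg_cycle ends C" "f \<in> C"
  shows "(fst (ends f), snd (ends f)) \<in> (mg_adj ends (C - {f}))\<^sup>*"
proof -
  obtain es vs where es: "es \<noteq> []" "distinct es" "set es = C" "length vs = length es" "distinct vs"
    and ed: "\<forall>i<length es. ends (es ! i) = (vs ! i, vs ! ((i + 1) mod length es))
                   \<or> ends (es ! i) = (vs ! ((i + 1) mod length es), vs ! i)"
    using assms(1) unfolding mg_cycle_def by blast
  define L where "L = length es"
  define R where "R = mg_adj ends (C - {f})"
  obtain i where i: "i < L" "es ! i = f" using assms(2) es(3) unfolding L_def by (metis in_set_conv_nth)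
  have ne: "s < L \<Longrightarrow> s \<noteq> i \<Longrightarrow> es ! s \<in> C - {f}" for s
    using es(3) i nth_eq_iff_index_eq[OF es(2), of s i] nth_mem[of s es] unfolding L_def by auto
  have step: "s < L \<Longrightarrow> s \<noteq> i \<Longrightarrow> (vs ! s, vs ! ((s + 1) mod L)) \<in> R\<^sup>*" for s
  proof -
    assume s: "s < L" "s \<noteq> i"
    have e: "es ! s \<in> C - {f}" using ne s .
    have "ends (es!s) = (vs ! s, vs ! ((s + 1) mod L)) \<or> ends (es!s) = (vs ! ((s + 1) mod L), vs ! s)"
      using ed s unfolding L_def by auto
    then have "(vs ! s, vs ! ((s + 1) mod L)) \<in> R" using adj_edge[OF e, of ends] unfolding R_def by auto
    then show ?thesis by blast
  qed
  have seg: "j \<le> j' \<Longrightarrow> j' < L \<Longrightarrow> (\<forall>s. j \<le> s \<and> s < j' \<longrightarrow> s \<noteq> i) \<Longrightarrow> (vs ! j, vs ! j') \<in> R\<^sup>*" for j j'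
  proof (induction j')
    case 0 then show ?case by simp
  next
    case (Suc j')
    show ?case
    proof (cases "j = Suc j'")
      case True then show ?thesis by simp
    next
      case False
      have A: "(vs ! j, vs ! j') \<in> R\<^sup>*" using Suc.IH Suc.prems False by simp
      have m: "(j' + 1) mod L = Suc j'" using Suc.prems by simp
      have B: "(vs ! j', vs ! (Suc j')) \<in> R\<^sup>*" using step[of j'] Suc.prems False m by simp
      show ?thesis using rtrancl_trans[OF A B] .
    qed
  qed
  have "(vs ! ((i + 1) mod L), vs ! i) \<in> R\<^sup>*"
  proof (cases "i = L - 1")
    case True
    then have "(i + 1) mod L = 0" using i by simp
    then show ?thesis using seg[of 0 i] i by auto
  next
    case False
    then have "(i + 1) mod L = i + 1" using i by simp
    have A: "(vs ! (i+1), vs ! (L - 1)) \<in> R\<^sup>*" using seg[of "i+1" "L - 1"] i False by simp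
    have m: "(L - 1 + 1) mod L = 0" using i by simp
    have B: "(vs ! (L - 1), vs ! 0) \<in> R\<^sup>*" using step[of "L - 1"] i False m by simp
    have C: "(vs ! 0, vs ! i) \<in> R\<^sup>*" using seg[of 0 i] i by simp
    show ?thesis using rtrancl_trans[OF rtrancl_trans[OF A B] C] \<open>(i + 1) mod L = i + 1\<close> by simp
  qed
  moreover have "ends f = (vs ! i, vs ! ((i + 1) mod L)) \<or> ends f = (vs ! ((i + 1) mod L), vs ! i)"
    using ed i unfolding L_def by auto
  ultimately show ?thesis unfolding R_def using adj_sym[of "vs ! ((i + 1) mod L)" "vs ! i" ends "C - {f}"] by auto
qed


context
  fixes ns :: "int list"
  assumes ne: "ns \<noteq> []" and nz: "\<forall>x\<in>set ns. x \<noteq> 0"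
begin

abbreviation "E3 \<equiv> {1..ncross ns}"
abbreviation "BV3 \<equiv> black_regions ns"
abbreviation "TE3 \<equiv> tait_ends ns"
abbreviation "K3 \<equiv> length ns"
abbreviation "cs3 \<equiv> csize ns"

lemma vtx_0[simp]: "vtx ns i 0 = Rtop" by (simp add: vtx_def)
lemma vtx_c[simp]: "i < K3 \<Longrightarrow> vtx ns i (cs3 i) = Rbot" using csize_pos[OF nz] by (simp add: vtx_def)
lemma vtx_mid: "0 < t \<Longrightarrow> t < cs3 i \<Longrightarrow> vtx ns i t = Inside i (t - 1)" by (simp add: vtx_def)

lemma vtx_black: "i < K3 \<Longrightarrow> t \<le> cs3 i \<Longrightarrow> vtx ns i t \<in> BV3"
  by (auto simp: vtx_def black_regions_def pcols_def)

lemma black_vtx: "v \<in> BV3 \<Longrightarrow> \<exists>i<K3. \<exists>t\<le>cs3 i. v = vtx ns i t"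
proof -
  assume v: "v \<in> BV3"
  have k: "0 < K3" using ne by simp
  show ?thesis
  proof (cases "v = Rtop")
    case True then show ?thesis using k by (intro exI[of _ 0]) (auto intro!: exI[of _ 0])
  next
    case F1: False
    show ?thesis
    proof (cases "v = Rbot")
      case True then show ?thesis using k vtx_c by (intro exI[of _ 0]) auto
    next
      case False
      then obtain i p where "v = Inside i p" "i < K3" "p + 1 < cs3 i" using v F1 by (auto simp: black_regions_def pcols_def)
      then show ?thesis by (intro exI[of _ i]) (auto simp: vtx_def intro!: exI[of _ "Suc p"])
    qed
  qed
qed

lemma E_cases: "y \<in> E3 \<Longrightarrow> \<exists>i<K3. \<exists>p<cs3 i. y = cnum ns i p"
  using cnum_surj[OF nz] by metis

lemma tait_E: "i < K3 \<Longrightarrow> p < cs3 i \<Longrightarrow> TE3 (cnum ns i p) = (vtx ns i p, vtx ns i (Suc p))"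
  using tait_cnum[OF nz] .

lemma cnum_eq_iff: "i < K3 \<Longrightarrow> p < cs3 i \<Longrightarrow> i' < K3 \<Longrightarrow> p' < cs3 i' \<Longrightarrow>
   cnum ns i p = cnum ns i' p' \<longleftrightarrow> i = i' \<and> p = p'"
  using cnum_inj[OF nz] by blast

lemma cut_all:
  assumes FE: "F \<subseteq> E3" and p: "\<forall>i<K3. p i < cs3 i \<and> cnum ns i (p i) \<notin> F"
  shows "\<forall>i<K3. (vtx ns i (p i), vtx ns i (Suc (p i))) \<notin> (mg_adj TE3 F)\<^sup>*"
proof -
  define X where "X = {Rtop} \<union> {Inside i t | i t. i < K3 \<and> t + 1 \<le> p i}"
  have memX: "i < K3 \<Longrightarrow> t \<le> cs3 i \<Longrightarrow> vtx ns i t \<in> X \<longleftrightarrow> t \<le> p i" for i t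
    using p by (auto simp: X_def vtx_def)
  have cl: "\<forall>f\<in>F. (fst (TE3 f) \<in> X \<longleftrightarrow> snd (TE3 f) \<in> X)"
  proof
    fix f assume f: "f \<in> F"
    then obtain i s where cis: "i < K3" "s < cs3 i" "f = cnum ns i s" using FE E_cases by blast
    then have "s \<noteq> p i" using p f by auto
    then show "(fst (TE3 f) \<in> X \<longleftrightarrow> snd (TE3 f) \<in> X)" using cis memX tait_E by auto
  qed
  show ?thesis
  proof (intro allI impI notI)
    fix i assume i: "i < K3" and c: "(vtx ns i (p i), vtx ns i (Suc (p i))) \<in> (mg_adj TE3 F)\<^sup>*"
    have "vtx ns i (p i) \<in> X" using memX i p by auto
    then have "vtx ns i (Suc (p i)) \<in> X" using adj_closed[OF cl c] by blast
    then show False using memX i p by (simp add: Suc_le_eq)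
  qed
qed

lemma cut_all_top_bot:
  assumes FE: "F \<subseteq> E3" and p: "\<forall>i<K3. p i < cs3 i \<and> cnum ns i (p i) \<notin> F"
  shows "(Rtop, Rbot) \<notin> (mg_adj TE3 F)\<^sup>*"
proof -
  define X where "X = {Rtop} \<union> {Inside i t | i t. i < K3 \<and> t + 1 \<le> p i}"
  have memX: "i < K3 \<Longrightarrow> t \<le> cs3 i \<Longrightarrow> vtx ns i t \<in> X \<longleftrightarrow> t \<le> p i" for i t
    using p by (auto simp: X_def vtx_def)
  have cl: "\<forall>f\<in>F. (fst (TE3 f) \<in> X \<longleftrightarrow> snd (TE3 f) \<in> X)"
  proof
    fix f assume f: "f \<in> F"
    then obtain i s where cis: "i < K3" "s < cs3 i" "f = cnum ns i s" using FE E_cases by blast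
    then have "s \<noteq> p i" using p f by auto
    then show "(fst (TE3 f) \<in> X \<longleftrightarrow> snd (TE3 f) \<in> X)" using cis memX tait_E by auto
  qed
  have "Rbot \<notin> X" by (simp add: X_def)
  then show ?thesis using adj_closed[OF cl] by (auto simp: X_def)
qed

lemma cut_two_ord:
  assumes FE: "F \<subseteq> E3" and i: "i < K3" and pp: "p < p'" "p' < cs3 i"
    and nF: "cnum ns i p \<notin> F" "cnum ns i p' \<notin> F"
  shows "(vtx ns i p, vtx ns i (Suc p)) \<notin> (mg_adj TE3 F)\<^sup>*"
    and "(vtx ns i p', vtx ns i (Suc p')) \<notin> (mg_adj TE3 F)\<^sup>*"
proof -
  define X where "X = {Inside i t | t. p \<le> t \<and> t < p'}"
  have memX: "i' < K3 \<Longrightarrow> t \<le> cs3 i' \<Longrightarrow> vtx ns i' t \<in> X \<longleftrightarrow> i' = i \<and> p < t \<and> t \<le> p'" for i' t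
    using pp by (auto simp: X_def vtx_def)
  have cl: "\<forall>f\<in>F. (fst (TE3 f) \<in> X \<longleftrightarrow> snd (TE3 f) \<in> X)"
  proof
    fix f assume f: "f \<in> F"
    then obtain i' s where cis: "i' < K3" "s < cs3 i'" "f = cnum ns i' s" using FE E_cases by blast
    then have "i' = i \<longrightarrow> s \<noteq> p \<and> s \<noteq> p'" using nF f by auto
    then show "(fst (TE3 f) \<in> X \<longleftrightarrow> snd (TE3 f) \<in> X)" using cis memX tait_E by auto
  qed
  show "(vtx ns i p, vtx ns i (Suc p)) \<notin> (mg_adj TE3 F)\<^sup>*"
  proof
    assume "(vtx ns i p, vtx ns i (Suc p)) \<in> (mg_adj TE3 F)\<^sup>*"
    then have c: "(vtx ns i (Suc p), vtx ns i p) \<in> (mg_adj TE3 F)\<^sup>*" by (rule adj_sym)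
    have "vtx ns i (Suc p) \<in> X" using memX i pp by auto
    then have "vtx ns i p \<in> X" using adj_closed[OF cl c] by blast
    then show False using memX i pp by auto
  qed
  show "(vtx ns i p', vtx ns i (Suc p')) \<notin> (mg_adj TE3 F)\<^sup>*"
  proof
    assume c: "(vtx ns i p', vtx ns i (Suc p')) \<in> (mg_adj TE3 F)\<^sup>*"
    have "vtx ns i p' \<in> X" using memX i pp by auto
    then have "vtx ns i (Suc p') \<in> X" using adj_closed[OF cl c] by blast
    then show False using memX i pp by auto
  qed
qed

lemma cut_two:
  assumes FE: "F \<subseteq> E3" and i: "i < K3" and pp: "p \<noteq> p'" "p < cs3 i" "p' < cs3 i"
    and nF: "cnum ns i p \<notin> F" "cnum ns i p' \<notin> F"
  shows "(vtx ns i p, vtx ns i (Suc p)) \<notin> (mg_adj TE3 F)\<^sup>*"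
proof (cases "p < p'")
  case True show ?thesis using cut_two_ord(1)[OF FE i True pp(3) nF] by blast
next
  case False then have "p' < p" using pp by simp
  then show ?thesis using cut_two_ord(2)[of F i p' p] FE i pp nF by blast
qed

lemma conn_down:
  "i < K3 \<Longrightarrow> t \<le> cs3 i \<Longrightarrow> (\<forall>s<t. cnum ns i s \<in> F) \<Longrightarrow> (Rtop, vtx ns i t) \<in> (mg_adj TE3 F)\<^sup>*"
proof (induction t)
  case 0 then show ?case by simp
next
  case (Suc t)
  then have A: "(Rtop, vtx ns i t) \<in> (mg_adj TE3 F)\<^sup>*" by simp
  have "cnum ns i t \<in> F" using Suc.prems by simp
  then have "(vtx ns i t, vtx ns i (Suc t)) \<in> mg_adj TE3 F"
    using adj_edge[of "cnum ns i t" F "TE3"] tait_E[of i t] Suc.prems by simp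
  then show ?case using A by simp
qed

lemma conn_up:
  "i < K3 \<Longrightarrow> d \<le> cs3 i \<Longrightarrow> (\<forall>s. cs3 i - d \<le> s \<and> s < cs3 i \<longrightarrow> cnum ns i s \<in> F)
     \<Longrightarrow> (vtx ns i (cs3 i - d), Rbot) \<in> (mg_adj TE3 F)\<^sup>*"
proof (induction d)
  case 0 then show ?case by simp
next
  case (Suc d)
  have "\<forall>s. cs3 i - d \<le> s \<and> s < cs3 i \<longrightarrow> cnum ns i s \<in> F" using Suc.prems(3) by auto
  then have A: "(vtx ns i (cs3 i - d), Rbot) \<in> (mg_adj TE3 F)\<^sup>*" using Suc.IH Suc.prems by simp
  define t where "t = cs3 i - Suc d"
  have t: "t < cs3 i" "Suc t = cs3 i - d" using Suc.prems by (auto simp: t_def)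
  have "cnum ns i t \<in> F" using Suc.prems t by (simp add: t_def)
  then have "(vtx ns i t, vtx ns i (Suc t)) \<in> mg_adj TE3 F"
    using adj_edge[of "cnum ns i t" F "TE3"] tait_E[of i t] Suc.prems t by simp
  then show ?case using A t unfolding t_def[symmetric] by (metis converse_rtrancl_into_rtrancl)
qed

lemma conn_lemma:
  assumes m: "m < K3" "\<forall>s<cs3 m. cnum ns m s \<in> F"
    and r: "\<forall>i<K3. \<forall>s<cs3 i. s \<noteq> r i \<longrightarrow> cnum ns i s \<in> F"
  shows "mg_connected BV3 TE3 F"
proof -
  let ?R = "mg_adj TE3 F"
  have tb: "(Rtop, Rbot) \<in> ?R\<^sup>*" using conn_down[of m "cs3 m" F] m by simp
  have top: "(Rtop, v) \<in> ?R\<^sup>*" if v: "v \<in> BV3" for v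
  proof -
    obtain i t where it: "i < K3" "t \<le> cs3 i" "v = vtx ns i t" using black_vtx[OF v] by blast
    show ?thesis
    proof (cases "t \<le> r i")
      case True
      then show ?thesis using conn_down[of i t F] it r by auto
    next
      case False
      have "(vtx ns i (cs3 i - (cs3 i - t)), Rbot) \<in> ?R\<^sup>*"
        using conn_up[of i "cs3 i - t" F] it r False by auto
      then have "(Rbot, v) \<in> ?R\<^sup>*" using it adj_sym by auto
      then show ?thesis using tb by (metis rtrancl_trans)
    qed
  qed
  show ?thesis unfolding mg_connected_def
    using top adj_sym by (metis rtrancl_trans)
qed

end


definition cyc :: "int list \<Rightarrow> nat \<Rightarrow> nat \<Rightarrow> nat set" where
  "cyc ns a b = {cnum ns a s | s. s < csize ns a} \<union> {cnum ns b s | s. s < csize ns b}"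

context
  fixes ns :: "int list"
  assumes ne: "ns \<noteq> []" and nz: "\<forall>x\<in>set ns. x \<noteq> 0"
begin

abbreviation "E4 \<equiv> {1..ncross ns}"
abbreviation "BV4 \<equiv> black_regions ns"
abbreviation "TE4 \<equiv> tait_ends ns"
abbreviation "K4 \<equiv> length ns"
abbreviation "cs4 \<equiv> csize ns"

lemma vtx_inj:
  assumes "i < K4" "i' < K4" "t \<le> cs4 i" "t' \<le> cs4 i'" "vtx ns i t = vtx ns i' t'"
  shows "(t = 0 \<and> t' = 0) \<or> (t = cs4 i \<and> t' = cs4 i') \<or> (i = i' \<and> t = t')"
  using assms by (auto simp: vtx_def split: if_splits)


lemma cyc_is_cycle:
  assumes ab: "a < K4" "b < K4" "a \<noteq> b"
  shows "mg_cycle TE4 (cyc ns a b)"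
proof -
  define L where "L = cs4 a + cs4 b"
  have ca: "0 < cs4 a" and cb: "0 < cs4 b" using csize_pos[OF nz] ab by auto
  define ef where "ef t = (if t < cs4 a then cnum ns a t else cnum ns b (L - 1 - t))" for t
  define vf where "vf t = (if t < cs4 a then vtx ns a t else vtx ns b (L - t))" for t
  define es where "es = map ef [0..<L]"
  define vs where "vs = map vf [0..<L]"
  have len: "length es = L" "length vs = L" by (auto simp: es_def vs_def)
  have esn: "t < L \<Longrightarrow> es ! t = ef t" for t by (simp add: es_def)
  have vsn: "t < L \<Longrightarrow> vs ! t = vf t" for t by (simp add: vs_def)
  have "inj_on ef {0..<L}"
  proof (rule inj_onI)
    fix x y assume x: "x \<in> {0..<L}" and y: "y \<in> {0..<L}" and e: "ef x = ef y"
    show "x = y"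
    proof (cases "x < cs4 a"; cases "y < cs4 a")
      assume "x < cs4 a" "y < cs4 a" then show ?thesis using e ab cnum_eq_iff[OF ne nz] by (auto simp: ef_def)
    next
      assume h: "x < cs4 a" "\<not> y < cs4 a"
      have "L - 1 - y < cs4 b" using h y by (auto simp: L_def)
      then show ?thesis using h e ab x y cnum_eq_iff[OF ne nz, of a x b "L - 1 - y"]
        by (auto simp: ef_def)
    next
      assume h: "\<not> x < cs4 a" "y < cs4 a"
      have "L - 1 - x < cs4 b" using h x by (auto simp: L_def)
      then show ?thesis using h e ab x y cnum_eq_iff[OF ne nz, of a y b "L - 1 - x"]
        by (auto simp: ef_def)
    next
      assume h: "\<not> x < cs4 a" "\<not> y < cs4 a"
      have "L - 1 - x < cs4 b" "L - 1 - y < cs4 b" using h x y by (auto simp: L_def)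
      then show ?thesis using h e ab x y cnum_eq_iff[OF ne nz, of b "L - 1 - x" b "L - 1 - y"]
        by (auto simp: ef_def L_def)
    qed
  qed
  then have des: "distinct es" by (simp add: es_def distinct_map)
  have "inj_on vf {0..<L}"
  proof (rule inj_onI)
    fix x y assume x: "x \<in> {0..<L}" and y: "y \<in> {0..<L}" and e: "vf x = vf y"
    show "x = y"
    proof (cases "x < cs4 a"; cases "y < cs4 a")
      assume "x < cs4 a" "y < cs4 a" then show ?thesis using e ab vtx_inj[of a a x y] by (auto simp: vf_def)
    next
      assume h: "x < cs4 a" "\<not> y < cs4 a"
      have "L - y \<le> cs4 b" "0 < L - y" using h y by (auto simp: L_def)
      then show ?thesis using h e ab x y vtx_inj[of a b x "L - y"]
        by (auto simp: vf_def)
    next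
      assume h: "\<not> x < cs4 a" "y < cs4 a"
      have "L - x \<le> cs4 b" "0 < L - x" using h x by (auto simp: L_def)
      then show ?thesis using h e ab x y vtx_inj[of b a "L - x" y]
        by (auto simp: vf_def)
    next
      assume h: "\<not> x < cs4 a" "\<not> y < cs4 a"
      have "L - x \<le> cs4 b" "0 < L - x" "L - y \<le> cs4 b" "0 < L - y" using h x y by (auto simp: L_def)
      then show ?thesis using h e ab x y vtx_inj[of b b "L - x" "L - y"]
        by (auto simp: vf_def L_def)
    qed
  qed
  then have dvs: "distinct vs" by (simp add: vs_def distinct_map)
  have "set es = ef ` {0..<L}" by (simp add: es_def)
  also have "\<dots> = cyc ns a b"
  proof
    show "ef ` {0..<L} \<subseteq> cyc ns a b" by (auto simp: ef_def cyc_def L_def)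
  next
    show "cyc ns a b \<subseteq> ef ` {0..<L}"
    proof
      fix x assume "x \<in> cyc ns a b"
      then consider s where "s < cs4 a" "x = cnum ns a s" | s where "s < cs4 b" "x = cnum ns b s"
        unfolding cyc_def by blast
      then show "x \<in> ef ` {0..<L}"
      proof cases
        case 1 then show ?thesis by (intro image_eqI[of _ _ s]) (auto simp: ef_def L_def)
      next
        case 2 then show ?thesis by (intro image_eqI[of _ _ "L - 1 - s"]) (auto simp: ef_def L_def)
      qed
    qed
  qed
  finally have ses: "set es = cyc ns a b" .
  have edges: "\<forall>t<length es. TE4 (es ! t) = (vs ! t, vs ! ((t + 1) mod length es))
                   \<or> TE4 (es ! t) = (vs ! ((t + 1) mod length es), vs ! t)"
  proof (intro allI impI)
    fix t assume t: "t < length es"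
    then have tL: "t < L" using len by simp
    show "TE4 (es ! t) = (vs ! t, vs ! ((t + 1) mod length es))
                   \<or> TE4 (es ! t) = (vs ! ((t + 1) mod length es), vs ! t)"
    proof (cases "t < cs4 a")
      case True
      have "(t + 1) mod L = t + 1" using True cb L_def by simp
      moreover have "vf (t + 1) = vtx ns a (Suc t)"
      proof (cases "t + 1 < cs4 a")
        case True then show ?thesis by (simp add: vf_def)
      next
        case False
        then have "Suc t = cs4 a" using \<open>t < cs4 a\<close> by simp
        then show ?thesis using False ab vtx_c[OF ne nz, of a] vtx_c[OF ne nz, of b] by (simp add: vf_def L_def)
      qed
      moreover have "t + 1 < L" using True cb L_def by simp
      ultimately have v2: "vs ! ((t + 1) mod length es) = vtx ns a (Suc t)" using vsn len by simp
      have v1: "vs ! t = vtx ns a t" using vsn[OF tL] True by (simp add: vf_def)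
      have "es ! t = cnum ns a t" using esn[OF tL] True by (simp add: ef_def)
      then show ?thesis using v1 v2 tait_E[OF ne nz, of a t] True ab by simp
    next
      case False
      define u where "u = L - 1 - t"
      have u: "u < cs4 b" "L - t = Suc u" using False tL by (auto simp: u_def L_def)
      have te: "TE4 (es ! t) = (vtx ns b u, vtx ns b (Suc u))"
        using esn[OF tL] False tait_E[OF ne nz, of b u] ab u by (simp add: ef_def u_def)
      have v1: "vs ! t = vtx ns b (Suc u)" using vsn[OF tL] False u by (simp add: vf_def)
      show ?thesis
      proof (cases "t + 1 < L")
        case True
        then have "vs ! ((t + 1) mod length es) = vtx ns b u"
          using len vsn[OF True] False u by (simp add: vf_def u_def)
        then show ?thesis using te v1 by simp
      next
        case F2: False
        then have "t + 1 = L" using tL by simp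
        then have "(t + 1) mod length es = 0" using len by simp
        moreover have "vs ! 0 = Rtop" using vsn[of 0] ca by (simp add: vf_def L_def vtx_def)
        moreover have "u = 0" using F2 tL by (simp add: u_def)
        ultimately show ?thesis using te v1 by (simp add: vtx_def)
      qed
    qed
  qed
  show ?thesis unfolding mg_cycle_def
    apply (rule exI[of _ es], rule exI[of _ vs])
    using des dvs ses len edges ca by (auto simp: es_def L_def)
qed

end


definition treeset :: "int list \<Rightarrow> nat \<Rightarrow> (nat \<Rightarrow> nat) \<Rightarrow> nat set" where
  "treeset ns m r = {cnum ns i p | i p. i < length ns \<and> p < csize ns i \<and> (i = m \<or> p \<noteq> r i)}"

definition Conf :: "int list \<Rightarrow> (nat \<times> (nat \<Rightarrow> nat)) set" where
  "Conf ns = {(m, r). m < length ns \<and> (\<forall>i<length ns. r i < csize ns i) \<and> r m = csize ns m - 1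
                 \<and> (\<forall>i. length ns \<le> i \<longrightarrow> r i = 0)}"

context
  fixes ns :: "int list"
  assumes ne: "ns \<noteq> []" and nz: "\<forall>x\<in>set ns. x \<noteq> 0"
begin

abbreviation "E5 \<equiv> {1..ncross ns}"
abbreviation "BV5 \<equiv> black_regions ns"
abbreviation "TE5 \<equiv> tait_ends ns"
abbreviation "K5 \<equiv> length ns"
abbreviation "cs5 \<equiv> csize ns"

lemmas cnum_eq_iff_5 = cnum_eq_iff[OF ne nz]
lemmas tait_E_5 = tait_E[OF ne nz]
lemmas E_cases_5 = E_cases[OF ne nz]
lemmas vtx_black_5 = vtx_black[OF ne nz]
lemmas cut_all_5 = cut_all[OF ne nz]
lemmas cut_all_top_bot_5 = cut_all_top_bot[OF ne nz]
lemmas cut_two_5 = cut_two[OF ne nz]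
lemmas conn_lemma_5 = conn_lemma[OF ne nz]
lemmas cyc_is_cycle_5 = cyc_is_cycle[OF ne nz]
lemmas cnum_range_5 = cnum_range[OF nz]
lemmas csize_pos_5 = csize_pos[OF nz]

lemma inS: "i < K5 \<Longrightarrow> p < cs5 i \<Longrightarrow> cnum ns i p \<in> treeset ns m r \<longleftrightarrow> (i = m \<or> p \<noteq> r i)"
  unfolding treeset_def using cnum_eq_iff_5 by blast

lemma treeset_E: "treeset ns m r \<subseteq> E5"
  unfolding treeset_def using cnum_range_5 by blast

lemma cycle_elem: "mg_cycle TE5 C \<Longrightarrow> \<exists>f. f \<in> C"
  unfolding mg_cycle_def by (metis list.set_sel(1))

lemma nonbridge_vtx:
  assumes "mg_cycle TE5 C" "f \<in> C" "f = cnum ns i p" "i < K5" "p < cs5 i"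
  shows "(vtx ns i p, vtx ns i (Suc p)) \<in> (mg_adj TE5 (C - {f}))\<^sup>*"
  using cycle_nonbridge[OF assms(1,2)] assms(3-5) tait_E_5 by simp

lemma tree_st:
  assumes c: "(m, r) \<in> Conf ns"
  shows "mg_spanning_tree BV5 E5 TE5 (treeset ns m r)"
proof -
  let ?S = "treeset ns m r"
  have m: "m < K5" and r: "\<forall>i<K5. r i < cs5 i" using c by (auto simp: Conf_def)
  have conn: "mg_connected BV5 TE5 ?S"
    by (rule conn_lemma_5[of m _ r]) (use m inS in auto)
  have nocyc: "\<not> (\<exists>C\<subseteq>?S. mg_cycle TE5 C)"
  proof
    assume "\<exists>C\<subseteq>?S. mg_cycle TE5 C"
    then obtain C where C: "C \<subseteq> ?S" "mg_cycle TE5 C" by blast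
    obtain f where f: "f \<in> C" using cycle_elem[OF C(2)] by blast
    have CE: "C \<subseteq> E5" using C(1) treeset_E by blast
    obtain i p where ip: "i < K5" "p < cs5 i" "f = cnum ns i p" using E_cases_5 f CE by blast
    have nb: "(vtx ns i p, vtx ns i (Suc p)) \<in> (mg_adj TE5 (C - {f}))\<^sup>*"
      using nonbridge_vtx[OF C(2) f ip(3,1,2)] .
    have FE: "C - {f} \<subseteq> E5" using CE by blast
    show False
    proof (cases "i = m")
      case False
      then have "p \<noteq> r i" using inS ip f C(1) by blast
      moreover have "cnum ns i (r i) \<notin> C - {f}" using inS[of i "r i" m r] ip r False C(1) by auto
      ultimately show False using cut_two_5[OF FE ip(1) _ ip(2), of "r i"] nb r ip by auto
    next
      case True
      define p' where "p' = r(m := p)"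
      have "\<forall>i'<K5. p' i' < cs5 i' \<and> cnum ns i' (p' i') \<notin> C - {f}"
        using inS[of _ _ m r] r ip True C(1) by (auto simp: p'_def)
      from cut_all_5[OF FE this] ip True nb show False by (auto simp: p'_def)
    qed
  qed
  show ?thesis unfolding mg_spanning_tree_def using treeset_E conn nocyc by blast
qed

lemma st_tree:
  assumes st: "mg_spanning_tree BV5 E5 TE5 S"
  shows "\<exists>(m, r)\<in>Conf ns. S = treeset ns m r"
proof -
  have SE: "S \<subseteq> E5" and conn: "mg_connected BV5 TE5 S" and acyc: "\<not> (\<exists>C\<subseteq>S. mg_cycle TE5 C)"
    using st unfolding mg_spanning_tree_def by auto
  have two: False if "i < K5" "p < cs5 i" "p' < cs5 i" "p \<noteq> p'" "cnum ns i p \<notin> S" "cnum ns i p' \<notin> S" for i p p'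
  proof -
    have "(vtx ns i p, vtx ns i (Suc p)) \<notin> (mg_adj TE5 S)\<^sup>*" using cut_two_5[OF SE that(1,4,2,3,5,6)] .
    moreover have "vtx ns i p \<in> BV5" "vtx ns i (Suc p) \<in> BV5" using vtx_black_5 that by auto
    ultimately show False using conn unfolding mg_connected_def by blast
  qed
  have "\<exists>m<K5. \<forall>s<cs5 m. cnum ns m s \<in> S"
  proof (rule ccontr)
    assume "\<not> ?thesis"
    then have "\<forall>i<K5. \<exists>p. p < cs5 i \<and> cnum ns i p \<notin> S" by auto
    then obtain p where p: "\<forall>i<K5. p i < cs5 i \<and> cnum ns i (p i) \<notin> S" by metis
    have "(Rtop, Rbot) \<notin> (mg_adj TE5 S)\<^sup>*" using cut_all_top_bot_5[OF SE p] .
    moreover have "Rtop \<in> BV5" "Rbot \<in> BV5" by (auto simp: black_regions_def)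
    ultimately show False using conn unfolding mg_connected_def by blast
  qed
  then obtain m where m: "m < K5" "\<forall>s<cs5 m. cnum ns m s \<in> S" by blast
  have other: "\<exists>p<cs5 i. cnum ns i p \<notin> S" if "i < K5" "i \<noteq> m" for i
  proof (rule ccontr)
    assume "\<not> ?thesis"
    then have "cyc ns m i \<subseteq> S" using m unfolding cyc_def by auto
    then show False using acyc cyc_is_cycle_5[OF m(1) that(1) that(2)[symmetric]] by blast
  qed
  define r where "r i = (if i < K5 \<and> i \<noteq> m then (SOME p. p < cs5 i \<and> cnum ns i p \<notin> S)
                         else if i = m then cs5 m - 1 else 0)" for i
  have r1: "r i < cs5 i \<and> cnum ns i (r i) \<notin> S" if "i < K5" "i \<noteq> m" for i
    using someI_ex[OF other[OF that]] that by (simp add: r_def)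
  have conf: "(m, r) \<in> Conf ns"
    using m r1 csize_pos_5 by (auto simp: Conf_def r_def)
  have "S = treeset ns m r"
  proof
    show "S \<subseteq> treeset ns m r"
    proof
      fix x assume x: "x \<in> S"
      then obtain i p where ip: "i < K5" "p < cs5 i" "x = cnum ns i p" using SE E_cases_5 by blast
      then have "i = m \<or> p \<noteq> r i" using r1 x by blast
      then show "x \<in> treeset ns m r" using inS ip by blast
    qed
  next
    show "treeset ns m r \<subseteq> S"
    proof
      fix x assume x: "x \<in> treeset ns m r"
      then obtain i p where ip: "i < K5" "p < cs5 i" "x = cnum ns i p" "i = m \<or> p \<noteq> r i"
        unfolding treeset_def by blast
      show "x \<in> S"
      proof (cases "i = m")
        case True then show ?thesis using m ip by auto
      next
        case False then show ?thesis using two[of i p "r i"] r1 ip by blast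
      qed
    qed
  qed
  then show ?thesis using conf by blast
qed

lemma trees_eq: "tait_spanning_trees ns = (\<lambda>(m, r). treeset ns m r) ` Conf ns"
  unfolding tait_spanning_trees_def using st_tree tree_st by fastforce

lemma treeset_inj: "inj_on (\<lambda>(m, r). treeset ns m r) (Conf ns)"
proof (rule inj_onI, clarify)
  fix m r m' r' assume c: "(m, r) \<in> Conf ns" "(m', r') \<in> Conf ns" and eq: "treeset ns m r = treeset ns m' r'"
  have m: "m < K5" "m' < K5" and rr: "\<forall>i<K5. r i < cs5 i" "\<forall>i<K5. r' i < cs5 i"
    using c by (auto simp: Conf_def)
  have mm: "m = m'"
  proof (rule ccontr)
    assume "m \<noteq> m'"
    then have "cnum ns m (r' m) \<in> treeset ns m r" "cnum ns m (r' m) \<notin> treeset ns m' r'"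
      using inS m rr by auto
    then show False using eq by simp
  qed
  have "r i = r' i" for i
  proof (cases "i < K5")
    case True
    show ?thesis
    proof (cases "i = m")
      case True then show ?thesis using c mm by (simp add: Conf_def)
    next
      case False
      have "cnum ns i (r i) \<notin> treeset ns m' r'" using eq inS[of i "r i" m r] \<open>i < K5\<close> rr False by auto
      then show ?thesis using inS[of i "r i" m' r'] \<open>i < K5\<close> rr False mm by auto
    qed
  next
    case False then show ?thesis using c by (simp add: Conf_def)
  qed
  then show "m = m' \<and> r = r'" using mm by auto
qed

end


definition LV :: "int list \<Rightarrow> nat \<Rightarrow> (nat \<Rightarrow> nat) \<Rightarrow> nat \<Rightarrow> nat \<Rightarrow> bool" where
  "LV ns m r i p = (if i = m then m = 0 else if p < r i then i = 0 else if r i < p then i \<noteq> 0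
                    else (i < m \<and> p = (if i = 0 then 0 else csize ns i - 1)))"

lemma min_iff: "finite A \<Longrightarrow> x \<in> A \<Longrightarrow> (x = Min A) = (\<forall>y\<in>A. x \<le> y)"
  by (metis Min_eqI Min_le)

context
  fixes ns :: "int list"
  assumes ne: "ns \<noteq> []" and nz: "\<forall>x\<in>set ns. x \<noteq> 0"
begin

abbreviation "E6 \<equiv> {1..ncross ns}"
abbreviation "BV6 \<equiv> black_regions ns"
abbreviation "TE6 \<equiv> tait_ends ns"
abbreviation "K6 \<equiv> length ns"
abbreviation "cs6 \<equiv> csize ns"

lemmas cnum_eq_iff_6 = cnum_eq_iff[OF ne nz]
lemmas tait_E_6 = tait_E[OF ne nz]
lemmas E_cases_6 = E_cases[OF ne nz]
lemmas vtx_black_6 = vtx_black[OF ne nz]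
lemmas cut_all_6 = cut_all[OF ne nz]
lemmas cut_two_6 = cut_two[OF ne nz]
lemmas conn_lemma_6 = conn_lemma[OF ne nz]
lemmas cyc_is_cycle_6 = cyc_is_cycle[OF ne nz]
lemmas cnum_range_6 = cnum_range[OF nz]
lemmas csize_pos_6 = csize_pos[OF nz]
lemmas inS_6 = inS[OF ne nz]
lemmas treeset_E_6 = treeset_E[OF ne nz]
lemmas tree_st_6 = tree_st[OF ne nz]
lemmas nonbridge_vtx_6 = nonbridge_vtx[OF ne nz]
lemmas cycle_elem_6 = cycle_elem[OF ne nz]

lemma not_conn:
  assumes "(vtx ns i p, vtx ns i (Suc p)) \<notin> (mg_adj TE6 F)\<^sup>*" "i < K6" "p < cs6 i"
  shows "\<not> mg_connected BV6 TE6 F"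
  using assms vtx_black_6[of i p] vtx_black_6[of i "Suc p"] unfolding mg_connected_def by auto

lemma cnum_le_same: "i < K6 \<Longrightarrow> p < cs6 i \<Longrightarrow> p' < cs6 i \<Longrightarrow> p \<noteq> p' \<Longrightarrow>
   cnum ns i p \<le> cnum ns i p' \<longleftrightarrow> (if i = 0 then p < p' else p' < p)"
  using cnum_same_col[OF nz, of p i p'] cnum_same_col[OF nz, of p' i p] cnum_eq_iff_6[of i p i p']
  by (auto split: if_splits)

lemma letter_other_in:
  assumes c: "(m, r) \<in> Conf ns" and ip: "i < K6" "p < cs6 i" "i \<noteq> m" "p \<noteq> r i"
  shows "(cnum ns i p = Min {f \<in> E6. mg_connected BV6 TE6 (insert f (treeset ns m r - {cnum ns i p}))})
         = LV ns m r i p"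
proof -
  let ?S = "treeset ns m r"
  let ?e = "cnum ns i p"
  let ?A = "{f \<in> E6. mg_connected BV6 TE6 (insert f (?S - {?e}))}"
  have m: "m < K6" and r: "\<forall>i<K6. r i < cs6 i" using c by (auto simp: Conf_def)
  have eS: "?e \<in> ?S" using inS_6 ip by auto
  have eA: "?e \<in> ?A" using eS tree_st_6[OF c] cnum_range_6 ip
    by (simp add: insert_absorb mg_spanning_tree_def)
  have rA: "cnum ns i (r i) \<in> ?A"
  proof -
    have "mg_connected BV6 TE6 (insert (cnum ns i (r i)) (?S - {?e}))"
      apply (rule conn_lemma_6[of m _ "r(i := p)"])
      using m ip r inS_6[of _ _ m r] cnum_eq_iff_6 by auto
    then show ?thesis using cnum_range_6 ip r by auto
  qed
  have Aonly: "y = ?e \<or> y = cnum ns i (r i)" if y: "y \<in> ?A" for y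
  proof (rule ccontr)
    assume nn: "\<not> ?thesis"
    let ?F = "insert y (?S - {?e})"
    have FE: "?F \<subseteq> E6" using y treeset_E_6 by auto
    have "cnum ns i (r i) \<notin> ?F" using nn inS_6[of i "r i" m r] ip r by auto
    moreover have "?e \<notin> ?F" using nn by auto
    ultimately have "(vtx ns i p, vtx ns i (Suc p)) \<notin> (mg_adj TE6 ?F)\<^sup>*"
      using cut_two_6[OF FE ip(1) ip(4) ip(2), of ] r ip by auto
    then show False using not_conn ip y by blast
  qed
  have fin: "finite ?A" by simp
  have "(?e = Min ?A) = (\<forall>y\<in>?A. ?e \<le> y)" using min_iff[OF fin eA] .
  also have "\<dots> = (?e \<le> cnum ns i (r i))" using Aonly rA by auto
  also have "\<dots> = (if i = 0 then p < r i else r i < p)" using cnum_le_same ip r by auto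
  also have "\<dots> = LV ns m r i p" using ip by (auto simp: LV_def)
  finally show ?thesis .
qed

lemma letter_m:
  assumes c: "(m, r) \<in> Conf ns" and ip: "p < cs6 m"
  shows "(cnum ns m p = Min {f \<in> E6. mg_connected BV6 TE6 (insert f (treeset ns m r - {cnum ns m p}))})
         = LV ns m r m p"
proof -
  let ?S = "treeset ns m r"
  let ?e = "cnum ns m p"
  let ?A = "{f \<in> E6. mg_connected BV6 TE6 (insert f (?S - {?e}))}"
  have m: "m < K6" and r: "\<forall>i<K6. r i < cs6 i" using c by (auto simp: Conf_def)
  have eS: "?e \<in> ?S" using inS_6 ip m by auto
  have eA: "?e \<in> ?A" using eS tree_st_6[OF c] cnum_range_6 ip m
    by (simp add: insert_absorb mg_spanning_tree_def)
  have rA: "cnum ns i (r i) \<in> ?A" if i: "i < K6" "i \<noteq> m" for i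
  proof -
    let ?F = "insert (cnum ns i (r i)) (?S - {?e})"
    have a1: "\<forall>s<cs6 i. cnum ns i s \<in> ?F"
    proof (intro allI impI)
      fix s assume s: "s < cs6 i"
      have "cnum ns i s \<noteq> ?e" using cnum_eq_iff_6[of i s m p] s i ip m by simp
      then show "cnum ns i s \<in> ?F" using inS_6[of i s m r] s i by auto
    qed
    have a2: "\<forall>i'<K6. \<forall>s<cs6 i'. s \<noteq> (r(m := p)) i' \<longrightarrow> cnum ns i' s \<in> ?F"
    proof (intro allI impI)
      fix i' s assume i': "i' < K6" and s: "s < cs6 i'" and sn: "s \<noteq> (r(m := p)) i'"
      have "cnum ns i' s \<noteq> ?e" using cnum_eq_iff_6[of i' s m p] s i' ip m sn by auto
      moreover have "cnum ns i' s \<in> ?S" using inS_6[of i' s m r] s i' sn by (cases "i' = m") auto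
      ultimately show "cnum ns i' s \<in> ?F" by auto
    qed
    have "mg_connected BV6 TE6 ?F" using conn_lemma_6[OF i(1) a1 a2] .
    then show ?thesis using cnum_range_6[of i "r i"] i r by auto
  qed
  have Aonly: "y = ?e \<or> (\<exists>i<K6. i \<noteq> m \<and> y = cnum ns i (r i))" if y: "y \<in> ?A" for y
  proof (rule ccontr)
    assume nn: "\<not> ?thesis"
    let ?F = "insert y (?S - {?e})"
    have FE: "?F \<subseteq> E6" using y treeset_E_6 by auto
    have "\<forall>i'<K6. (r(m := p)) i' < cs6 i' \<and> cnum ns i' ((r(m := p)) i') \<notin> ?F"
    proof (intro allI impI)
      fix i' assume i': "i' < K6"
      show "(r(m := p)) i' < cs6 i' \<and> cnum ns i' ((r(m := p)) i') \<notin> ?F"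
      proof (cases "i' = m")
        case True then show ?thesis using nn ip by auto
      next
        case False
        then have "cnum ns i' (r i') \<notin> ?S" "y \<noteq> cnum ns i' (r i')" using inS_6[of i' "r i'" m r] r i' nn by auto
        then show ?thesis using False r i' by auto
      qed
    qed
    from cut_all_6[OF FE this] m have "(vtx ns m ((r(m := p)) m), vtx ns m (Suc ((r(m := p)) m))) \<notin> (mg_adj TE6 ?F)\<^sup>*"
      by blast
    then have "(vtx ns m p, vtx ns m (Suc p)) \<notin> (mg_adj TE6 ?F)\<^sup>*" by simp
    then show False using not_conn ip m y by blast
  qed
  have fin: "finite ?A" by simp
  have "(?e = Min ?A) = (\<forall>y\<in>?A. ?e \<le> y)" using min_iff[OF fin eA] .
  also have "\<dots> = (\<forall>i<K6. i \<noteq> m \<longrightarrow> ?e \<le> cnum ns i (r i))" using Aonly rA by blast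
  also have "\<dots> = (m = 0)"
  proof
    assume h: "\<forall>i<K6. i \<noteq> m \<longrightarrow> ?e \<le> cnum ns i (r i)"
    show "m = 0"
    proof (rule ccontr)
      assume "m \<noteq> 0"
      have k0: "0 < K6" using ne by simp
      have "r 0 < cs6 0" using r[rule_format, OF k0] .
      then have "cnum ns 0 (r 0) < ?e" using cnum_lt_col[OF nz, of 0 m "r 0" p] ip \<open>m \<noteq> 0\<close> by auto
      then show False using h \<open>m \<noteq> 0\<close> m by fastforce
    qed
  next
    assume "m = 0"
    show "\<forall>i<K6. i \<noteq> m \<longrightarrow> ?e \<le> cnum ns i (r i)"
    proof (intro allI impI)
      fix i assume "i < K6" "i \<noteq> m"
      then show "?e \<le> cnum ns i (r i)" using cnum_lt_col[OF nz, of m i p "r i"] r ip \<open>m = 0\<close> by simp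
    qed
  qed
  also have "\<dots> = LV ns m r m p" by (simp add: LV_def)
  finally show ?thesis .
qed

lemma the_cycle:
  assumes c: "(m, r) \<in> Conf ns" and ip: "i < K6" "i \<noteq> m"
  shows "(THE C. C \<subseteq> insert (cnum ns i (r i)) (treeset ns m r) \<and> mg_cycle TE6 C) = cyc ns m i"
proof -
  let ?S = "treeset ns m r"
  let ?e = "cnum ns i (r i)"
  have m: "m < K6" and r: "\<forall>i<K6. r i < cs6 i" using c by (auto simp: Conf_def)
  have sub: "cyc ns m i \<subseteq> insert ?e ?S"
    unfolding cyc_def using inS_6 m ip by auto
  have cy: "mg_cycle TE6 (cyc ns m i)" using cyc_is_cycle_6 m ip by auto
  show ?thesis
  proof (rule the_equality)
    show "cyc ns m i \<subseteq> insert ?e ?S \<and> mg_cycle TE6 (cyc ns m i)" using sub cy by blast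
  next
    fix C assume C: "C \<subseteq> insert ?e ?S \<and> mg_cycle TE6 C"
    have "insert ?e ?S \<subseteq> E6" using treeset_E_6 cnum_range_6[OF ip(1)] r ip by auto
    then have CE: "C \<subseteq> E6" using C by blast
    have nb: "(vtx ns i' s, vtx ns i' (Suc s)) \<in> (mg_adj TE6 (C - {f}))\<^sup>*"
      if "f \<in> C" "f = cnum ns i' s" "i' < K6" "s < cs6 i'" for f i' s
      using nonbridge_vtx_6[of C f i' s] C that by blast
    have FE: "C - {f} \<subseteq> E6" for f using CE by blast
    have C1: "C \<subseteq> cyc ns m i"
    proof
      fix f assume f: "f \<in> C"
      obtain i' s where is': "i' < K6" "s < cs6 i'" "f = cnum ns i' s" using CE f E_cases_6 by blast
      show "f \<in> cyc ns m i"
      proof (cases "i' = m \<or> i' = i")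
        case True then show ?thesis using is' unfolding cyc_def by auto
      next
        case False
        then have "s \<noteq> r i'" using f C is' inS_6[of i' s m r] cnum_eq_iff_6 ip r by auto
        moreover have "cnum ns i' (r i') \<notin> C - {f}"
          using C inS_6[of i' "r i'" m r] is' r False cnum_eq_iff_6 ip by auto
        ultimately have "(vtx ns i' s, vtx ns i' (Suc s)) \<notin> (mg_adj TE6 (C - {f}))\<^sup>*"
          using cut_two_6[OF FE is'(1) _ is'(2), of "r i'"] r is' by auto
        then show ?thesis using nb f is' by blast
      qed
    qed
    have C2: "cyc ns m i \<subseteq> C"
    proof
      fix g assume g: "g \<in> cyc ns m i"
      then obtain ig sg where gg: "ig = m \<or> ig = i" "sg < cs6 ig" "g = cnum ns ig sg"
        unfolding cyc_def by blast
      have igK: "ig < K6" using gg m ip by auto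
      show "g \<in> C"
      proof (rule ccontr)
        assume gC: "g \<notin> C"
        obtain f where f: "f \<in> C" using cycle_elem_6 C by blast
        then obtain jf sf where ff: "jf = m \<or> jf = i" "sf < cs6 jf" "f = cnum ns jf sf"
          using C1 unfolding cyc_def by blast
        have jfK: "jf < K6" using ff m ip by auto
        have nbf: "(vtx ns jf sf, vtx ns jf (Suc sf)) \<in> (mg_adj TE6 (C - {f}))\<^sup>*"
          using nb f ff jfK by blast
        show False
        proof (cases "jf = ig")
          case True
          then have "sf \<noteq> sg" using gC f ff gg by auto
          then have "(vtx ns jf sf, vtx ns jf (Suc sf)) \<notin> (mg_adj TE6 (C - {f}))\<^sup>*"
            using cut_two_6[OF FE jfK _ ff(2), of sg] gg True gC ff by auto
          then show False using nbf by blast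
        next
          case False
          define q where "q i'' = (if i'' = jf then sf else if i'' = ig then sg else 0)" for i''
          have "\<forall>i''<K6. q i'' < cs6 i'' \<and> cnum ns i'' (q i'') \<notin> C - {f}"
          proof (intro allI impI)
            fix i'' assume i'': "i'' < K6"
            show "q i'' < cs6 i'' \<and> cnum ns i'' (q i'') \<notin> C - {f}"
            proof (cases "i'' = jf \<or> i'' = ig")
              case True then show ?thesis using ff gg gC False by (auto simp: q_def)
            next
              case F2: False
              then have "i'' \<noteq> m \<and> i'' \<noteq> i" using ff gg False by auto
              then have "cnum ns i'' 0 \<notin> cyc ns m i"
                unfolding cyc_def using cnum_eq_iff_6 i'' csize_pos_6 m ip by fastforce
              then show ?thesis using F2 C1 csize_pos_6 i'' by (auto simp: q_def)
            qed
          qed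
          from cut_all_6[OF FE this] jfK have "(vtx ns jf sf, vtx ns jf (Suc sf)) \<notin> (mg_adj TE6 (C - {f}))\<^sup>*"
            by (auto simp: q_def)
          then show False using nbf by blast
        qed
      qed
    qed
    show "C = cyc ns m i" using C1 C2 by blast
  qed
qed

lemma letter_other_out:
  assumes c: "(m, r) \<in> Conf ns" and ip: "i < K6" "i \<noteq> m"
  shows "(cnum ns i (r i) = Min (THE C. C \<subseteq> insert (cnum ns i (r i)) (treeset ns m r) \<and> mg_cycle TE6 C))
         = LV ns m r i (r i)"
proof -
  have m: "m < K6" and r: "\<forall>i<K6. r i < cs6 i" using c by (auto simp: Conf_def)
  let ?e = "cnum ns i (r i)"
  have fin: "finite (cyc ns m i)" unfolding cyc_def by simp
  have ein: "?e \<in> cyc ns m i" unfolding cyc_def using r ip by auto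
  have "(?e = Min (cyc ns m i)) = (\<forall>y\<in>cyc ns m i. ?e \<le> y)" using min_iff[OF fin ein] .
  also have "\<dots> = ((\<forall>s<cs6 i. ?e \<le> cnum ns i s) \<and> (\<forall>s<cs6 m. ?e \<le> cnum ns m s))"
    unfolding cyc_def by blast
  also have "\<dots> = (i < m \<and> r i = (if i = 0 then 0 else cs6 i - 1))"
  proof (cases "i < m")
    case True
    then have "\<forall>s<cs6 m. ?e \<le> cnum ns m s" using cnum_lt_col[OF nz, of i m "r i"] r ip less_imp_le by blast
    moreover have "(\<forall>s<cs6 i. ?e \<le> cnum ns i s) = (r i = (if i = 0 then 0 else cs6 i - 1))"
    proof
      assume h: "\<forall>s<cs6 i. ?e \<le> cnum ns i s"
      define s0 where "s0 = (if i = 0 then 0 else cs6 i - 1)"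
      have s0: "s0 < cs6 i" using csize_pos_6 ip by (auto simp: s0_def)
      show "r i = (if i = 0 then 0 else cs6 i - 1)"
      proof (rule ccontr)
        assume "\<not> ?thesis"
        then have "r i \<noteq> s0" by (simp add: s0_def)
        moreover have "cnum ns i (r i) \<le> cnum ns i s0" using h s0 by blast
        ultimately have "if i = 0 then r i < s0 else s0 < r i" using cnum_le_same[of i "r i" s0] r ip s0 by blast
        then show False using r ip by (cases "i = 0") (auto simp: s0_def)
      qed
    next
      assume "r i = (if i = 0 then 0 else cs6 i - 1)"
      then show "\<forall>s<cs6 i. ?e \<le> cnum ns i s" by (auto simp: cnum_def)
    qed
    ultimately show ?thesis using True by simp
  next
    case False
    then have "m < i" using ip by simp
    then have "cnum ns m 0 < ?e" using cnum_lt_col[OF nz, of m i 0 "r i"] r ip csize_pos_6 m by auto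
    then have "\<not> (\<forall>s<cs6 m. ?e \<le> cnum ns m s)" using csize_pos_6 m by force
    then show ?thesis using False by simp
  qed
  also have "\<dots> = LV ns m r i (r i)" using ip by (simp add: LV_def)
  finally show ?thesis using the_cycle[OF c ip] by simp
qed

lemma tree_letter:
  assumes c: "(m, r) \<in> Conf ns" and ip: "i < K6" "p < cs6 i"
  shows "tutte_letter BV6 E6 TE6 (neg_cross ns) (treeset ns m r) (cnum ns i p)
         = Letter (i = m \<or> p \<noteq> r i) (LV ns m r i p) (ns ! i < 0)"
proof -
  have ng: "neg_cross ns (cnum ns i p) = (ns ! i < 0)" using neg_cnum[OF nz ip] .
  show ?thesis
  proof (cases "i = m")
    case True
    then show ?thesis using letter_m[OF c, of p] ip inS_6[of i p m r] ng by (simp add: tutte_letter_def)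
  next
    case False
    show ?thesis
    proof (cases "p = r i")
      case True
      then show ?thesis using letter_other_out[OF c ip(1) False] ip inS_6[of i p m r] ng False
        by (simp add: tutte_letter_def)
    next
      case F2: False
      then show ?thesis using letter_other_in[OF c ip False F2] ip inS_6[of i p m r] ng False
        by (simp add: tutte_letter_def)
    qed
  qed
qed

end


definition chc :: "nat \<Rightarrow> (nat \<Rightarrow> nat) \<Rightarrow> nat \<Rightarrow> nat \<Rightarrow> corner" where
  "chc m r i p = (if p < r i then Below else if p = r i then (if i = m then Below else if i < m then Right else Left)
                  else Above)"

definition matchset :: "int list \<Rightarrow> nat \<Rightarrow> (nat \<Rightarrow> nat) \<Rightarrow> (nat \<times> corner) set" where
  "matchset ns m r = {(cnum ns i p, chc m r i p) | i p. i < length ns \<and> p < csize ns i}"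

context
  fixes ns :: "int list"
  assumes ne: "ns \<noteq> []" and nz: "\<forall>x\<in>set ns. x \<noteq> 0"
begin

abbreviation "E7 \<equiv> {1..ncross ns}"
abbreviation "BV7 \<equiv> black_regions ns"
abbreviation "K7 \<equiv> length ns"
abbreviation "cs7 \<equiv> csize ns"
abbreviation "GV7 \<equiv> gamma_region_vertices ns"

lemmas cnum_eq_iff_7 = cnum_eq_iff[OF ne nz]
lemmas E_cases_7 = E_cases[OF ne nz]
lemmas cnum_range_7 = cnum_range[OF nz]
lemmas csize_pos_7 = csize_pos[OF nz]

lemma cr_Rbot: "corner_reg ns i p x = Rbot \<longleftrightarrow> x = Below \<and> p + 1 = cs7 i"
  by (cases x) (auto simp: corner_reg_def)
lemma cr_Rtop: "corner_reg ns i p x = Rtop \<longleftrightarrow> x = Above \<and> p = 0"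
  by (cases x) (auto simp: corner_reg_def)
lemma cr_Inside: "corner_reg ns i p x = Inside i' t \<longleftrightarrow>
    i' = i \<and> ((x = Below \<and> t = p \<and> p + 1 \<noteq> cs7 i) \<or> (x = Above \<and> 0 < p \<and> t = p - 1))"
  by (cases x) (auto simp: corner_reg_def)
lemma cr_W: "corner_reg ns i p x = W j \<longleftrightarrow>
    (x = Left \<and> 0 < i \<and> j = i - 1) \<or> (x = Right \<and> i + 1 \<noteq> K7 \<and> j = i)"
  by (cases x) (auto simp: corner_reg_def pcols_def)
lemma cr_U: "corner_reg ns i p x = U \<longleftrightarrow> (x = Left \<and> i = 0) \<or> (x = Right \<and> i + 1 = K7)"
  by (cases x) (auto simp: corner_reg_def pcols_def)

lemma GV_eq: "GV7 = {Rbot} \<union> {Inside i t | i t. i < K7 \<and> t + 1 < cs7 i} \<union> {W j | j. j + 1 < K7}"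
  by (auto simp: gamma_region_vertices_def regions_def black_regions_def white_regions_def pcols_def)

lemma corner_cases: "x = Above \<or> x = Below \<or> x = Left \<or> x = Right"
  by (cases x) auto

lemma creg_E: "j \<in> E7 \<Longrightarrow> \<exists>i<K7. \<exists>p<cs7 i. j = cnum ns i p \<and> (\<forall>x. creg ns j x = corner_reg ns i p x)"
  using E_cases_7 creg_cnum[OF nz] by metis

lemma ex1_two: "\<exists>!x. P x \<Longrightarrow> P a \<Longrightarrow> P b \<Longrightarrow> a = b" by blast

lemma mem_matchset: "i < K7 \<Longrightarrow> p < cs7 i \<Longrightarrow> (cnum ns i p, c) \<in> matchset ns m r \<longleftrightarrow> c = chc m r i p"
  unfolding matchset_def using cnum_eq_iff_7 by blast

lemma matchset_pm:
  assumes c: "(m, r) \<in> Conf ns"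
  shows "matchset ns m r \<in> perfect_matchings ns"
proof -
  have m: "m < K7" and r: "\<forall>i<K7. r i < cs7 i" and rm: "r m = cs7 m - 1" using c by (auto simp: Conf_def)
  let ?M = "matchset ns m r"
  let ?h = "\<lambda>i p. corner_reg ns i p (chc m r i p)"
  have sub: "?M \<subseteq> gamma_edges ns"
  proof
    fix e assume "e \<in> ?M"
    then obtain i p where ip: "i < K7" "p < cs7 i" "e = (cnum ns i p, chc m r i p)" unfolding matchset_def by blast
    have "?h i p \<noteq> U \<and> ?h i p \<noteq> Rtop"
      using ip m by (auto simp: cr_U cr_Rtop chc_def)
    then show "e \<in> gamma_edges ns" using ip cnum_range_7 creg_cnum[OF nz] by (auto simp: gamma_edges_def)
  qed
  have cross: "\<forall>j\<in>E7. \<exists>!c. (j, c) \<in> ?M"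
  proof
    fix j assume "j \<in> E7"
    then obtain i p where ip: "i < K7" "p < cs7 i" "j = cnum ns i p" using E_cases_7 by blast
    show "\<exists>!c. (j, c) \<in> ?M" using mem_matchset[OF ip(1,2)] ip(3) by auto
  qed
  have uniq: "\<exists>!e. e \<in> ?M \<and> creg ns (fst e) (snd e) = R"
    if tgt: "i0 < K7" "p0 < cs7 i0" "?h i0 p0 = R"
    and un: "\<And>i p. i < K7 \<Longrightarrow> p < cs7 i \<Longrightarrow> ?h i p = R \<Longrightarrow> i = i0 \<and> p = p0" for R i0 p0
  proof (rule ex1I[of _ "(cnum ns i0 p0, chc m r i0 p0)"])
    show "(cnum ns i0 p0, chc m r i0 p0) \<in> ?M \<and> creg ns (fst (cnum ns i0 p0, chc m r i0 p0)) (snd (cnum ns i0 p0, chc m r i0 p0)) = R"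
      using tgt creg_cnum[OF nz] mem_matchset by auto
  next
    fix e assume e: "e \<in> ?M \<and> creg ns (fst e) (snd e) = R"
    then obtain i p where ip: "i < K7" "p < cs7 i" "e = (cnum ns i p, chc m r i p)" unfolding matchset_def by blast
    then have "?h i p = R" using e creg_cnum[OF nz] by auto
    then show "e = (cnum ns i0 p0, chc m r i0 p0)" using un ip by auto
  qed
  have regs: "\<forall>R\<in>GV7. \<exists>!e. e \<in> ?M \<and> creg ns (fst e) (snd e) = R"
  proof
    fix R assume R: "R \<in> GV7"
    then consider "R = Rbot" | i t where "R = Inside i t" "i < K7" "t + 1 < cs7 i" | j where "R = W j" "j + 1 < K7"
      unfolding GV_eq by blast
    then show "\<exists>!e. e \<in> ?M \<and> creg ns (fst e) (snd e) = R"
    proof cases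
      case 1
      show ?thesis
      proof (rule uniq[of m "cs7 m - 1"])
        show "cs7 m - 1 < cs7 m" using csize_pos_7 m by simp
        show "?h m (cs7 m - 1) = R" using 1 rm csize_pos_7 m by (simp add: cr_Rbot chc_def)
      next
        fix i p assume "i < K7" "p < cs7 i" "?h i p = R"
        then show "i = m \<and> p = cs7 m - 1" using 1 r rm
          by (auto simp: cr_Rbot chc_def split: if_splits)
      qed (use m in auto)
    next
      case (2 i t)
      show ?thesis
      proof (cases "t < r i")
        case True
        show ?thesis
        proof (rule uniq[of i t])
          show "?h i t = R" using 2 True by (simp add: cr_Inside chc_def)
        next
          fix i' p assume "i' < K7" "p < cs7 i'" "?h i' p = R"
          then show "i' = i \<and> p = t" using 2 True
            by (auto simp: cr_Inside chc_def split: if_splits)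
        qed (use 2 in auto)
      next
        case False
        have im: "i \<noteq> m" using False 2 rm by auto
        show ?thesis
        proof (rule uniq[of i "t + 1"])
          show "?h i (t + 1) = R" using 2 False by (simp add: cr_Inside chc_def)
        next
          fix i' p assume "i' < K7" "p < cs7 i'" "?h i' p = R"
          then show "i' = i \<and> p = t + 1" using 2 False im
            by (auto simp: cr_Inside chc_def split: if_splits)
        qed (use 2 in auto)
      qed
    next
      case (3 j)
      show ?thesis
      proof (cases "j < m")
        case True
        show ?thesis
        proof (rule uniq[of j "r j"])
          show "?h j (r j) = R" using 3 True by (simp add: cr_W chc_def)
        next
          fix i' p assume "i' < K7" "p < cs7 i'" "?h i' p = R"
          then show "i' = j \<and> p = r j" using 3 True
            by (auto simp: cr_W chc_def split: if_splits)
        qed (use 3 r in auto)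
      next
        case False
        show ?thesis
        proof (rule uniq[of "j + 1" "r (j + 1)"])
          show "?h (j + 1) (r (j + 1)) = R" using 3 False by (simp add: cr_W chc_def)
        next
          fix i' p assume "i' < K7" "p < cs7 i'" "?h i' p = R"
          then show "i' = j + 1 \<and> p = r (j + 1)" using 3 False
            by (auto simp: cr_W chc_def split: if_splits)
        qed (use 3 r in auto)
      qed
    qed
  qed
  show ?thesis unfolding perfect_matchings_def using sub cross regs by blast
qed


lemma pm_match:
  assumes M: "M \<in> perfect_matchings ns"
  shows "\<exists>(m, r)\<in>Conf ns. M = matchset ns m r"
proof -
  have P1: "M \<subseteq> gamma_edges ns" and P2: "\<forall>j\<in>E7. \<exists>!c. (j, c) \<in> M"
    and P3: "\<forall>R\<in>GV7. \<exists>!e. e \<in> M \<and> creg ns (fst e) (snd e) = R"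
    using M unfolding perfect_matchings_def by auto
  define ch where "ch i p = (THE c. (cnum ns i p, c) \<in> M)" for i p
  have chM: "(cnum ns i p, ch i p) \<in> M" if "i < K7" "p < cs7 i" for i p
  proof -
    have "\<exists>!c. (cnum ns i p, c) \<in> M" using P2 cnum_range_7 that by blast
    then show ?thesis unfolding ch_def by (rule theI')
  qed
  have chU: "(cnum ns i p, c) \<in> M \<Longrightarrow> c = ch i p" if "i < K7" "p < cs7 i" for i p c
  proof -
    have "\<exists>!c. (cnum ns i p, c) \<in> M" using P2 cnum_range_7 that by blast
    then show "(cnum ns i p, c) \<in> M \<Longrightarrow> c = ch i p" using chM[OF that] by blast
  qed
  define cr where "cr i p = corner_reg ns i p (ch i p)" for i p
  have crok: "cr i p \<noteq> U \<and> cr i p \<noteq> Rtop" if "i < K7" "p < cs7 i" for i p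
    using P1 chM[OF that] creg_cnum[OF nz that] unfolding cr_def gamma_edges_def by auto
  have Uq: "i = i' \<and> p = p'" if "R \<in> GV7" "i < K7" "p < cs7 i" "i' < K7" "p' < cs7 i'" "cr i p = R" "cr i' p' = R"
    for R i p i' p'
  proof -
    let ?P = "\<lambda>e. e \<in> M \<and> creg ns (fst e) (snd e) = R"
    have ex: "\<exists>!e. ?P e" using P3 that(1) by blast
    have m1: "(cnum ns i p, ch i p) \<in> M" using chM[OF that(2,3)] .
    have q1: "creg ns (cnum ns i p) (ch i p) = R" using creg_cnum[OF nz that(2,3)] that(6) unfolding cr_def by simp
    have m2: "(cnum ns i' p', ch i' p') \<in> M" using chM[OF that(4,5)] .
    have q2: "creg ns (cnum ns i' p') (ch i' p') = R" using creg_cnum[OF nz that(4,5)] that(7) unfolding cr_def by simp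
    have "?P (cnum ns i p, ch i p)" "?P (cnum ns i' p', ch i' p')" using m1 q1 m2 q2 by simp_all
    then have "(cnum ns i p, ch i p) = (cnum ns i' p', ch i' p')" using ex1_two[OF ex] by blast
    then have "cnum ns i p = cnum ns i' p'" by simp
    then show ?thesis using cnum_eq_iff_7[OF that(2,3,4,5)] by blast
  qed
  have Ex: "\<exists>i<K7. \<exists>p<cs7 i. cr i p = R" if "R \<in> GV7" for R
  proof -
    have ex: "\<exists>!e. e \<in> M \<and> creg ns (fst e) (snd e) = R" using P3 that by blast
    obtain e where e: "e \<in> M" "creg ns (fst e) (snd e) = R" using ex1_implies_ex[OF ex] by blast
    obtain j c where jc: "e = (j, c)" by (cases e)
    have "j \<in> E7" using P1 e jc unfolding gamma_edges_def by auto
    then obtain i p where ip: "i < K7" "p < cs7 i" "j = cnum ns i p" using E_cases_7 by blast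
    have cc: "c = ch i p" using chU[OF ip(1,2)] e(1) jc ip(3) by blast
    have "creg ns (cnum ns i p) (ch i p) = R" using e(2) jc ip(3) cc by simp
    then have "cr i p = R" using creg_cnum[OF nz ip(1,2)] unfolding cr_def by simp
    then show ?thesis using ip(1,2) by blast
  qed
  define r where "r i = (LEAST p. ch i p \<noteq> Below \<or> p = cs7 i - 1)" for i
  have c1: "r i < cs7 i" if "i < K7" for i
  proof -
    have "r i \<le> cs7 i - 1" unfolding r_def by (rule Least_le) simp
    then show ?thesis using csize_pos_7[OF that] by linarith
  qed
  have c2: "ch i p = Below" if "p < r i" for i p
    using not_less_Least[OF that[unfolded r_def]] that by auto
  have c3: "ch i (r i) \<noteq> Below \<or> r i = cs7 i - 1" for i
    unfolding r_def by (rule LeastI[of _ "cs7 i - 1"]) simp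
  have c4: "ch i (r i) \<noteq> Above" if i: "i < K7" for i
  proof
    assume A: "ch i (r i) = Above"
    show False
    proof (cases "r i = 0")
      case True then show False using crok[OF i c1[OF i]] A by (simp add: cr_def cr_Rtop)
    next
      case False
      have b: "ch i (r i - 1) = Below" using c2 False by simp
      have R: "Inside i (r i - 1) \<in> GV7" using i c1[OF i] False unfolding GV_eq by auto
      have "cr i (r i - 1) = Inside i (r i - 1)" using b c1[OF i] False by (simp add: cr_def cr_Inside)
      moreover have "cr i (r i) = Inside i (r i - 1)" using A False by (simp add: cr_def cr_Inside)
      moreover have "r i - 1 < cs7 i" using c1[OF i] by simp
      ultimately have "i = i \<and> r i - 1 = r i" using Uq[OF R i _ i c1[OF i]] by blast
      then show False using False by simp
    qed
  qed
  have c5: "r i < p \<longrightarrow> p < cs7 i \<longrightarrow> ch i p = Above" if i: "i < K7" for i p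
  proof (induction p)
    case 0 then show ?case by simp
  next
    case (Suc p)
    show ?case
    proof (intro impI)
      assume a: "r i < Suc p" "Suc p < cs7 i"
      have R: "Inside i p \<in> GV7" using i a unfolding GV_eq by auto
      obtain i' p' where ip': "i' < K7" "p' < cs7 i'" "cr i' p' = Inside i p" using Ex[OF R] by blast
      then have ii: "i' = i" and opts: "(ch i p' = Below \<and> p = p') \<or> (ch i p' = Above \<and> p' = Suc p)"
        by (auto simp: cr_def cr_Inside)
      have "ch i p \<noteq> Below"
      proof (cases "p = r i")
        case True then show ?thesis using c3[of i] a by auto
      next
        case False then show ?thesis using Suc.IH a by auto
      qed
      then show "ch i (Suc p) = Above" using opts by auto
    qed
  qed
  have c6: "ch i (r i) = Below \<Longrightarrow> r i = cs7 i - 1" for i using c3 by auto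
  have chLR: "ch i p = Left \<or> ch i p = Right \<Longrightarrow> p = r i" if "i < K7" "p < cs7 i" for i p
  proof (rule ccontr)
    assume a: "ch i p = Left \<or> ch i p = Right" "p \<noteq> r i"
    then consider "p < r i" | "r i < p" by linarith
    then show False
    proof cases
      case 1 then show False using c2[OF 1] a by auto
    next
      case 2 then show False using c5[OF that(1), of p] that a by auto
    qed
  qed
  have RB: "Rbot \<in> GV7" unfolding GV_eq by simp
  obtain m p0 where mp: "m < K7" "p0 < cs7 m" "cr m p0 = Rbot" using Ex[OF RB] by blast
  have mB: "ch m p0 = Below" "p0 + 1 = cs7 m" using mp(3) by (auto simp: cr_def cr_Rbot)
  have p0r: "p0 = r m"
  proof (rule ccontr)
    assume "p0 \<noteq> r m"
    then consider "p0 < r m" | "r m < p0" by linarith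
    then show False
    proof cases
      case 1 then show False using c1[OF mp(1)] mB by linarith
    next
      case 2 then show False using c5[OF mp(1), of p0] mp mB by auto
    qed
  qed
  have rm: "r m = cs7 m - 1" using p0r mB by simp
  have chm: "ch m (r m) = Below" using mB p0r by simp
  have notB: "ch i (r i) \<noteq> Below" if "i < K7" "i \<noteq> m" for i
  proof
    assume b: "ch i (r i) = Below"
    then have "r i = cs7 i - 1" using c6 by blast
    then have "cr i (r i) = Rbot" using b csize_pos_7 that by (simp add: cr_def cr_Rbot)
    then show False using Uq[OF RB that(1) c1[OF that(1)] mp(1,2)] mp(3) that by blast
  qed
  have LR: "ch i (r i) = Left \<or> ch i (r i) = Right" if "i < K7" "i \<noteq> m" for i
    using notB[OF that] c4[OF that(1)] corner_cases by blast
  have d1: "m < i \<longrightarrow> i < K7 \<longrightarrow> ch i (r i) = Left" for i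
  proof (induction i)
    case 0 then show ?case by simp
  next
    case (Suc i)
    show ?case
    proof (intro impI)
      assume a: "m < Suc i" "Suc i < K7"
      have R: "W i \<in> GV7" using a unfolding GV_eq by auto
      obtain a' p' where ap: "a' < K7" "p' < cs7 a'" "cr a' p' = W i" using Ex[OF R] by blast
      then have opts: "(ch a' p' = Left \<and> 0 < a' \<and> i = a' - 1) \<or> (ch a' p' = Right \<and> i = a')"
        by (auto simp: cr_def cr_W)
      then have pr: "p' = r a'" using chLR[OF ap(1,2)] by blast
      have "\<not> (ch i (r i) = Right)"
      proof (cases "i = m")
        case True then show ?thesis using chm by simp
      next
        case False then show ?thesis using Suc.IH a by auto
      qed
      then show "ch (Suc i) (r (Suc i)) = Left" using opts pr by auto
    qed
  qed
  have d2: "\<forall>i. i + d = m \<longrightarrow> i < m \<longrightarrow> ch i (r i) = Right" for d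
  proof (induction d)
    case 0 then show ?case by simp
  next
    case (Suc d)
    show ?case
    proof (intro allI impI)
      fix i assume a: "i + Suc d = m" "i < m"
      have R: "W i \<in> GV7" using a mp unfolding GV_eq by auto
      obtain a' p' where ap: "a' < K7" "p' < cs7 a'" "cr a' p' = W i" using Ex[OF R] by blast
      then have opts: "(ch a' p' = Left \<and> 0 < a' \<and> i = a' - 1) \<or> (ch a' p' = Right \<and> i = a')"
        by (auto simp: cr_def cr_W)
      then have pr: "p' = r a'" using chLR[OF ap(1,2)] by blast
      have "\<not> (ch (Suc i) (r (Suc i)) = Left)"
      proof (cases "Suc i = m")
        case True then show ?thesis using chm by simp
      next
        case False
        then have "Suc i + d = m" "Suc i < m" using a by auto
        then show ?thesis using Suc.IH by auto
      qed
      then show "ch i (r i) = Right" using opts pr by auto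
    qed
  qed
  have d2': "i < m \<Longrightarrow> ch i (r i) = Right" for i using d2[of "m - i"] by simp
  define r' where "r' i = (if i < K7 then r i else 0)" for i
  have conf: "(m, r') \<in> Conf ns" using mp(1) c1 rm by (auto simp: Conf_def r'_def)
  have cheq: "ch i p = chc m r' i p" if "i < K7" "p < cs7 i" for i p
  proof -
    consider "p < r i" | "p = r i" | "r i < p" by linarith
    then show ?thesis
    proof cases
      case 1 then show ?thesis using c2 that by (simp add: chc_def r'_def)
    next
      case 2
      then show ?thesis using that chm d1[of i] d2'[of i] by (auto simp: chc_def r'_def)
    next
      case 3 then show ?thesis using c5[OF that(1)] that by (simp add: chc_def r'_def)
    qed
  qed
  have "M = matchset ns m r'"
  proof
    show "M \<subseteq> matchset ns m r'"
    proof
      fix e assume e: "e \<in> M"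
      obtain j c where jc: "e = (j, c)" by (cases e)
      have "j \<in> E7" using P1 e jc unfolding gamma_edges_def by auto
      then obtain i p where ip: "i < K7" "p < cs7 i" "j = cnum ns i p" using E_cases_7 by blast
      then have "c = ch i p" using chU e jc by blast
      then show "e \<in> matchset ns m r'" using jc ip cheq mem_matchset by auto
    qed
  next
    show "matchset ns m r' \<subseteq> M"
    proof
      fix e assume "e \<in> matchset ns m r'"
      then obtain i p where ip: "i < K7" "p < cs7 i" "e = (cnum ns i p, chc m r' i p)" unfolding matchset_def by blast
      then show "e \<in> M" using chM cheq by auto
    qed
  qed
  then show ?thesis using conf by blast
qed

end


context
  fixes ns :: "int list"
  assumes ne: "ns \<noteq> []" and nz: "\<forall>x\<in>set ns. x \<noteq> 0"
begin

abbreviation "E8 \<equiv> {1..ncross ns}"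
abbreviation "BV8 \<equiv> black_regions ns"
abbreviation "K8 \<equiv> length ns"
abbreviation "cs8 \<equiv> csize ns"

lemmas cnum_eq_iff_8 = cnum_eq_iff[OF ne nz]
lemmas E_cases_8 = E_cases[OF ne nz]
lemmas cnum_range_8 = cnum_range[OF nz]
lemmas csize_pos_8 = csize_pos[OF nz]
lemmas mem_matchset_8 = mem_matchset[OF ne nz]
lemmas cnum_le_same_8 = cnum_le_same[OF ne nz]

lemma matchset_inj: "inj_on (\<lambda>(m, r). matchset ns m r) (Conf ns)"
proof (rule inj_onI, clarify)
  fix m r m' r' assume c: "(m, r) \<in> Conf ns" "(m', r') \<in> Conf ns" and eq: "matchset ns m r = matchset ns m' r'"
  have m: "m < K8" "m' < K8" and rr: "\<forall>i<K8. r i < cs8 i" "\<forall>i<K8. r' i < cs8 i"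
    and rm: "r m = cs8 m - 1" "r' m' = cs8 m' - 1" using c by (auto simp: Conf_def)
  have ch: "chc m r i p = chc m' r' i p" if "i < K8" "p < cs8 i" for i p
    using mem_matchset_8[OF that, of "chc m r i p" m r] mem_matchset_8[OF that, of "chc m r i p" m' r'] eq by simp
  have mm: "m = m'"
  proof (rule ccontr)
    assume ne': "m \<noteq> m'"
    have p: "cs8 m - 1 < cs8 m" using csize_pos_8 m by simp
    have "chc m r m (cs8 m - 1) = Below" using rm by (simp add: chc_def)
    moreover have "chc m' r' m (cs8 m - 1) \<noteq> Below" using ne' rr m p by (auto simp: chc_def)
    ultimately show False using ch[OF m(1) p] by simp
  qed
  have "r i = r' i" for i
  proof (cases "i < K8")
    case True
    show ?thesis
    proof (cases "i = m")
      case True then show ?thesis using rm mm by simp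
    next
      case False
      have "chc m r i (r i) \<noteq> Below \<and> chc m r i (r i) \<noteq> Above" using False by (simp add: chc_def)
      moreover have "chc m r i (r i) = chc m' r' i (r i)" using ch \<open>i < K8\<close> rr by blast
      ultimately show ?thesis by (auto simp: chc_def split: if_splits)
    qed
  next
    case False then show ?thesis using c by (simp add: Conf_def)
  qed
  then show "m = m' \<and> r = r'" using mm by auto
qed

lemma matchings_eq: "perfect_matchings ns = (\<lambda>(m, r). matchset ns m r) ` Conf ns"
  using pm_match[OF ne nz] matchset_pm[OF ne nz] by fastforce

lemma the_chc: "i < K8 \<Longrightarrow> p < cs8 i \<Longrightarrow> (THE c. (cnum ns i p, c) \<in> matchset ns m r) = chc m r i p"
  using mem_matchset_8 by simp

lemma minR:
  assumes ip: "i < K8" "p < cs8 i" "corner_reg ns i p c = R"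
  shows "(cnum ns i p = Min {j' \<in> E8. \<exists>c'. creg ns j' c' = R})
       = (\<forall>i'<K8. \<forall>p'<cs8 i'. \<forall>c'. corner_reg ns i' p' c' = R \<longrightarrow> cnum ns i p \<le> cnum ns i' p')"
proof -
  let ?A = "{j' \<in> E8. \<exists>c'. creg ns j' c' = R}"
  have fin: "finite ?A" by simp
  have inA: "cnum ns i p \<in> ?A" using ip cnum_range_8 creg_cnum[OF nz] by auto
  have "(cnum ns i p = Min ?A) = (\<forall>y\<in>?A. cnum ns i p \<le> y)" using min_iff[OF fin inA] .
  also have "\<dots> = (\<forall>i'<K8. \<forall>p'<cs8 i'. \<forall>c'. corner_reg ns i' p' c' = R \<longrightarrow> cnum ns i p \<le> cnum ns i' p')"
  proof
    assume h: "\<forall>y\<in>?A. cnum ns i p \<le> y"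
    show "\<forall>i'<K8. \<forall>p'<cs8 i'. \<forall>c'. corner_reg ns i' p' c' = R \<longrightarrow> cnum ns i p \<le> cnum ns i' p'"
    proof (intro allI impI)
      fix i' p' c' assume a: "i' < K8" "p' < cs8 i'" "corner_reg ns i' p' c' = R"
      then have "cnum ns i' p' \<in> ?A" using cnum_range_8 creg_cnum[OF nz] by auto
      then show "cnum ns i p \<le> cnum ns i' p'" using h by blast
    qed
  next
    assume h: "\<forall>i'<K8. \<forall>p'<cs8 i'. \<forall>c'. corner_reg ns i' p' c' = R \<longrightarrow> cnum ns i p \<le> cnum ns i' p'"
    show "\<forall>y\<in>?A. cnum ns i p \<le> y"
    proof
      fix y assume y: "y \<in> ?A"
      then obtain c' where c': "creg ns y c' = R" by blast
      obtain i' p' where a: "i' < K8" "p' < cs8 i'" "y = cnum ns i' p'" using y E_cases_8 by blast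
      then have "corner_reg ns i' p' c' = R" using c' creg_cnum[OF nz] by simp
      then show "cnum ns i p \<le> y" using h a by blast
    qed
  qed
  finally show ?thesis .
qed

lemma colmin:
  assumes "i < K8" "p < cs8 i"
  shows "(\<forall>s<cs8 i. cnum ns i p \<le> cnum ns i s) = (p = (if i = 0 then 0 else cs8 i - 1))"
proof
  assume h: "\<forall>s<cs8 i. cnum ns i p \<le> cnum ns i s"
  define s0 where "s0 = (if i = 0 then 0 else cs8 i - 1)"
  have s0: "s0 < cs8 i" using csize_pos_8 assms by (auto simp: s0_def)
  show "p = (if i = 0 then 0 else cs8 i - 1)"
  proof (rule ccontr)
    assume "\<not> ?thesis"
    then have "p \<noteq> s0" by (simp add: s0_def)
    moreover have "cnum ns i p \<le> cnum ns i s0" using h s0 by blast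
    ultimately have "if i = 0 then p < s0 else s0 < p" using cnum_le_same_8[of i p s0] assms s0 by blast
    then show False using assms by (cases "i = 0") (auto simp: s0_def)
  qed
next
  assume "p = (if i = 0 then 0 else cs8 i - 1)"
  then show "\<forall>s<cs8 i. cnum ns i p \<le> cnum ns i s" by (auto simp: cnum_def)
qed

lemma match_letter:
  assumes c: "(m, r) \<in> Conf ns" and ip: "i < K8" "p < cs8 i"
  shows "alpha_edge ns (cnum ns i p, chc m r i p) = Letter (i = m \<or> p \<noteq> r i) (LV ns m r i p) (ns ! i < 0)"
proof -
  have m: "m < K8" and r: "\<forall>i<K8. r i < cs8 i" and rm: "r m = cs8 m - 1" using c by (auto simp: Conf_def)
  have ri: "r i < cs8 i" using r ip by blast
  define R where "R = corner_reg ns i p (chc m r i p)"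
  have cR: "corner_reg ns i p (chc m r i p) = R" by (simp add: R_def)
  have ae: "alpha_edge ns (cnum ns i p, chc m r i p)
      = Letter (R \<in> BV8) (cnum ns i p = Min {j' \<in> E8. \<exists>c'. creg ns j' c' = R}) (ns ! i < 0)"
    using creg_cnum[OF nz ip] neg_cnum[OF nz ip] by (simp add: alpha_edge_def R_def Let_def)
  have mn: "(cnum ns i p = Min {j' \<in> E8. \<exists>c'. creg ns j' c' = R})
       = (\<forall>i'<K8. \<forall>p'<cs8 i'. \<forall>c'. corner_reg ns i' p' c' = R \<longrightarrow> cnum ns i p \<le> cnum ns i' p')"
    using minR[OF ip cR] .
  consider (A) "p < r i" | (B) "p = r i" "i = m" | (C) "p = r i" "i \<noteq> m" "i < m" | (D) "p = r i" "i \<noteq> m" "m < i"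
    | (E) "r i < p" by linarith
  then show ?thesis
  proof cases
    case A
    then have Rv: "R = Inside i p" and p1: "p + 1 < cs8 i" using ri by (auto simp: R_def chc_def corner_reg_def)
    have bl: "R \<in> BV8" using Rv ip p1 by (auto simp: black_regions_def pcols_def)
    have "(\<forall>i'<K8. \<forall>p'<cs8 i'. \<forall>c'. corner_reg ns i' p' c' = R \<longrightarrow> cnum ns i p \<le> cnum ns i' p')
          = (cnum ns i p \<le> cnum ns i (p + 1))"
      using Rv p1 ip by (auto simp: cr_Inside[OF ne nz])
    also have "\<dots> = (i = 0)" using cnum_le_same_8[of i p "p + 1"] ip p1 by simp
    finally show ?thesis using ae mn bl A by (auto simp: LV_def)
  next
    case B
    then have Rv: "R = Rbot" using rm csize_pos_8 m by (auto simp: R_def chc_def corner_reg_def)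
    have bl: "R \<in> BV8" using Rv by (auto simp: black_regions_def)
    have pm: "p = cs8 m - 1" using B rm by simp
    have "(\<forall>i'<K8. \<forall>p'<cs8 i'. \<forall>c'. corner_reg ns i' p' c' = R \<longrightarrow> cnum ns i p \<le> cnum ns i' p')
          = (\<forall>i'<K8. cnum ns m p \<le> cnum ns i' (cs8 i' - 1))"
      using Rv B csize_pos_8 by (auto simp: cr_Rbot[OF ne nz]) (metis Suc_pred diff_Suc_1 lessI)
    also have "\<dots> = (m = 0)"
    proof
      assume h: "\<forall>i'<K8. cnum ns m p \<le> cnum ns i' (cs8 i' - 1)"
      show "m = 0"
      proof (rule ccontr)
        assume "m \<noteq> 0"
        have k0: "0 < K8" using ne by simp
        have "cnum ns 0 (cs8 0 - 1) < cnum ns m p"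
          using cnum_lt_col[OF nz, of 0 m "cs8 0 - 1" p] \<open>m \<noteq> 0\<close> csize_pos_8[OF k0] ip B by simp
        then show False using h k0 by fastforce
      qed
    next
      assume "m = 0"
      show "\<forall>i'<K8. cnum ns m p \<le> cnum ns i' (cs8 i' - 1)"
      proof (intro allI impI)
        fix i' assume i': "i' < K8"
        show "cnum ns m p \<le> cnum ns i' (cs8 i' - 1)"
        proof (cases "i' = 0")
          case True then show ?thesis using pm \<open>m = 0\<close> by simp
        next
          case False
          then show ?thesis using cnum_lt_col[OF nz, of m i' p "cs8 i' - 1"] \<open>m = 0\<close> ip B csize_pos_8[OF i'] by simp
        qed
      qed
    qed
    finally show ?thesis using ae mn bl B by (auto simp: LV_def)
  next
    case C
    then have Rv: "R = W i" using m by (auto simp: R_def chc_def corner_reg_def pcols_def)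
    have bl: "R \<notin> BV8" using Rv by (auto simp: black_regions_def)
    have i1: "i + 1 < K8" using C m by simp
    have "(\<forall>i'<K8. \<forall>p'<cs8 i'. \<forall>c'. corner_reg ns i' p' c' = R \<longrightarrow> cnum ns i p \<le> cnum ns i' p')
          = (\<forall>s<cs8 i. cnum ns i p \<le> cnum ns i s)"
    proof
      assume h: "\<forall>i'<K8. \<forall>p'<cs8 i'. \<forall>c'. corner_reg ns i' p' c' = R \<longrightarrow> cnum ns i p \<le> cnum ns i' p'"
      show "\<forall>s<cs8 i. cnum ns i p \<le> cnum ns i s"
      proof (intro allI impI)
        fix s assume "s < cs8 i"
        moreover have "corner_reg ns i s Right = R" using Rv i1 by (simp add: cr_W[OF ne nz])
        ultimately show "cnum ns i p \<le> cnum ns i s" using h ip by blast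
      qed
    next
      assume h: "\<forall>s<cs8 i. cnum ns i p \<le> cnum ns i s"
      show "\<forall>i'<K8. \<forall>p'<cs8 i'. \<forall>c'. corner_reg ns i' p' c' = R \<longrightarrow> cnum ns i p \<le> cnum ns i' p'"
      proof (intro allI impI)
        fix i' p' c' assume a: "i' < K8" "p' < cs8 i'" "corner_reg ns i' p' c' = R"
        then have "(0 < i' \<and> i = i' - 1) \<or> i' = i" using Rv by (auto simp: cr_W[OF ne nz])
        then show "cnum ns i p \<le> cnum ns i' p'"
        proof
          assume "0 < i' \<and> i = i' - 1"
          then show ?thesis using cnum_lt_col[OF nz, of i i' p p'] ip a by simp
        next
          assume "i' = i" then show ?thesis using h a by blast
        qed
      qed
    qed
    also have "\<dots> = (p = (if i = 0 then 0 else cs8 i - 1))" using colmin ip by blast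
    finally show ?thesis using ae mn bl C by (auto simp: LV_def)
  next
    case D
    then have Rv: "R = W (i - 1)" and i0: "0 < i" by (auto simp: R_def chc_def corner_reg_def)
    have bl: "R \<notin> BV8" using Rv by (auto simp: black_regions_def)
    have "corner_reg ns (i - 1) 0 Right = R" using Rv i0 ip by (simp add: cr_W[OF ne nz])
    moreover have "cnum ns (i - 1) 0 < cnum ns i p"
      using cnum_lt_col[OF nz, of "i - 1" i 0 p] i0 ip csize_pos_8[of "i - 1"] by simp
    moreover have "i - 1 < K8" "0 < cs8 (i - 1)" using ip csize_pos_8[of "i - 1"] by auto
    ultimately have "\<not> (\<forall>i'<K8. \<forall>p'<cs8 i'. \<forall>c'. corner_reg ns i' p' c' = R \<longrightarrow> cnum ns i p \<le> cnum ns i' p')"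
      by force
    then show ?thesis using ae mn bl D by (auto simp: LV_def)
  next
    case E
    have im: "i \<noteq> m" using E rm ip by auto
    have p0: "0 < p" using E by simp
    then have Rv: "R = Inside i (p - 1)" using E by (auto simp: R_def chc_def corner_reg_def)
    have bl: "R \<in> BV8" using Rv ip p0 by (auto simp: black_regions_def pcols_def)
    have "(\<forall>i'<K8. \<forall>p'<cs8 i'. \<forall>c'. corner_reg ns i' p' c' = R \<longrightarrow> cnum ns i p \<le> cnum ns i' p')
          = (cnum ns i p \<le> cnum ns i (p - 1))"
    proof
      assume h: "\<forall>i'<K8. \<forall>p'<cs8 i'. \<forall>c'. corner_reg ns i' p' c' = R \<longrightarrow> cnum ns i p \<le> cnum ns i' p'"
      have "corner_reg ns i (p - 1) Below = R" using Rv p0 ip by (simp add: cr_Inside[OF ne nz])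
      moreover have "p - 1 < cs8 i" using ip by simp
      ultimately show "cnum ns i p \<le> cnum ns i (p - 1)" using h ip by blast
    next
      assume h: "cnum ns i p \<le> cnum ns i (p - 1)"
      show "\<forall>i'<K8. \<forall>p'<cs8 i'. \<forall>c'. corner_reg ns i' p' c' = R \<longrightarrow> cnum ns i p \<le> cnum ns i' p'"
      proof (intro allI impI)
        fix i' p' c' assume a: "i' < K8" "p' < cs8 i'" "corner_reg ns i' p' c' = R"
        then have "i' = i \<and> (p' = p - 1 \<or> p' = p)" using Rv p0 by (auto simp: cr_Inside[OF ne nz])
        then show "cnum ns i p \<le> cnum ns i' p'" using h by auto
      qed
    qed
    also have "\<dots> = (i \<noteq> 0)"
    proof -
      have "p - 1 < cs8 i" "p \<noteq> p - 1" using ip p0 by auto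
      then have "(cnum ns i p \<le> cnum ns i (p - 1)) = (if i = 0 then p < p - 1 else p - 1 < p)"
        using cnum_le_same_8[of i p "p - 1"] ip by blast
      then show ?thesis using p0 by auto
    qed
    finally show ?thesis using ae mn bl E im by (auto simp: LV_def)
  qed
qed


lemma words_eq:
  assumes c: "(m, r) \<in> Conf ns"
  shows "alpha_word ns (matchset ns m r) = activity_word ns (treeset ns m r)"
  unfolding alpha_word_def activity_word_def
proof (rule map_cong[OF refl])
  fix j assume "j \<in> set [1..<ncross ns + 1]"
  then have "j \<in> E8" by auto
  then obtain i p where ip: "i < K8" "p < cs8 i" "j = cnum ns i p" using E_cases_8 by blast
  show "alpha_edge ns (j, THE c. (j, c) \<in> matchset ns m r)
        = tutte_letter (black_regions ns) {1..ncross ns} (tait_ends ns) (neg_cross ns) (treeset ns m r) j"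
    using the_chc[OF ip(1,2)] match_letter[OF c ip(1,2)] tree_letter[OF ne nz c ip(1,2)] ip(3) by simp
qed

end

theorem mainTheorem5:
  fixes ns :: "int list"
  assumes "ns \<noteq> []"
    and "\<forall>x\<in>set ns. x \<noteq> 0"
    and "one_component ns"
  shows "image_mset (alpha_word ns) (mset_set (perfect_matchings ns))
       = image_mset (activity_word ns) (mset_set (tait_spanning_trees ns))"
proof -
  let ?f = "\<lambda>(m, r). matchset ns m r"
  let ?g = "\<lambda>(m, r). treeset ns m r"
  have "image_mset (alpha_word ns) (mset_set (perfect_matchings ns))
      = image_mset (alpha_word ns) (image_mset ?f (mset_set (Conf ns)))"
    using matchings_eq[OF assms(1,2)] image_mset_mset_set[OF matchset_inj[OF assms(1,2)]] by simp
  also have "\<dots> = image_mset (alpha_word ns \<circ> ?f) (mset_set (Conf ns))"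
    by (simp add: multiset.map_comp)
  also have "\<dots> = image_mset (activity_word ns \<circ> ?g) (mset_set (Conf ns))"
  proof (rule image_mset_cong)
    fix x assume "x \<in># mset_set (Conf ns)"
    then have "x \<in> Conf ns" by (metis elem_mset_set empty_iff mset_set.infinite set_mset_empty)
    then show "(alpha_word ns \<circ> ?f) x = (activity_word ns \<circ> ?g) x"
      using words_eq[OF assms(1,2)] by (cases x) auto
  qed
  also have "\<dots> = image_mset (activity_word ns) (image_mset ?g (mset_set (Conf ns)))"
    by (simp add: multiset.map_comp)
  also have "\<dots> = image_mset (activity_word ns) (mset_set (tait_spanning_trees ns))"
    using trees_eq[OF assms(1,2)] image_mset_mset_set[OF treeset_inj[OF assms(1,2)]] by simp
  finally show ?thesis .
qed


end
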